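(* For all positive integers $d,m,r$ and every $\varepsilon>0$, $\mathbf{n}_{\mathrm{pol}}(d,m,r,\varepsilon)=\mathbf{n}_\infty(d,m,r,\varepsilon)$.
   Context: Spaces are real finite-dimensional normed spaces. A finite-dimensional normed space $F$ is polyhedral if its closed unit ball has finitely many extreme points; $\mathrm{Pol}_d$ is the class of polyhedral spaces $F$ whose dual unit ball $B_{F^*}$ has exactly $2d$ extreme points (e.g. $\ell_\infty^d\in\mathrm{Pol}_d$). $\mathrm{Emb}(X,Y)$ is the set of linear isometric embeddings with the operator-norm metric. An $r$-coloring is a map into $\{0,\dots,r-1\}$; a subset $F$ of the colored space $M$ is $\varepsilon$-monochromatic if for some color $i$ every element of $F$ is within distance $\varepsilon$ of an element of $M$ of color $i$. $\mathbf{n}_\infty(d,m,r,\varepsilon)$ is the least $n$ such that every $r$-coloring of $\mathrm{Emb}(\ell_\infty^d,\ell_\infty^n)$ has an $\varepsilon$-monochromatic set $\gamma\circ\mathrm{Emb}(\ell_\infty^d,\ell_\infty^m)$ for some $\gamma\in\mathrm{Emb}(\ell_\infty^m,\ell_\infty^n)$. $\mathbf{n}_{\mathrm{pol}}(d,m,r,\varepsilon)$ is the least $n\ge m$ such that for all $F\in\mathrm{Pol}_d$ and $G\in\mathrm{Pol}_m$, every $r$-coloring of $\mathrm{Emb}(F,\ell_\infty^n)$ has an $\varepsilon$-monochromatic set $T\circ\mathrm{Emb}(F,G)$ for some $T\in\mathrm{Emb}(G,\ell_\infty^n)$. *)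

theory Defs
  imports Complex_Main "HOL-Library.Extended_Nat"
begin

text \<open>Every finite-dimensional real normed space is isometric to
a space (vec k, N): the vectors x :: nat => real supported on {..<k}, with a norm N
on that space. All notions below (embeddings, operator-norm distance, extreme points)
are isometry invariant. Linear maps vec k -> vec l are represented by matrices
A :: nat => nat => real with A i j = 0 unless i < l and j < k.\<close>

definition vec :: "nat \<Rightarrow> (nat \<Rightarrow> real) set" where
  "vec k = {x. \<forall>i\<ge>k. x i = 0}"

definition is_norm :: "nat \<Rightarrow> ((nat \<Rightarrow> real) \<Rightarrow> real) \<Rightarrow> bool" where
  "is_norm k N \<longleftrightarrow>
     (\<forall>x\<in>vec k. 0 \<le> N x) \<and>
     (\<forall>x\<in>vec k. N x = 0 \<longrightarrow> x = (\<lambda>i. 0)) \<and>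
     (\<forall>x\<in>vec k. \<forall>c. N (\<lambda>i. c * x i) = \<bar>c\<bar> * N x) \<and>
     (\<forall>x\<in>vec k. \<forall>y\<in>vec k. N (\<lambda>i. x i + y i) \<le> N x + N y)"

definition linf :: "nat \<Rightarrow> (nat \<Rightarrow> real) \<Rightarrow> real" where
  "linf n x = Max (insert 0 ((\<lambda>i. \<bar>x i\<bar>) ` {..<n}))"

definition is_mat :: "nat \<Rightarrow> nat \<Rightarrow> (nat \<Rightarrow> nat \<Rightarrow> real) \<Rightarrow> bool" where
  "is_mat l k A \<longleftrightarrow> (\<forall>i j. (l \<le> i \<or> k \<le> j) \<longrightarrow> A i j = 0)"

definition mapply :: "nat \<Rightarrow> (nat \<Rightarrow> nat \<Rightarrow> real) \<Rightarrow> (nat \<Rightarrow> real) \<Rightarrow> (nat \<Rightarrow> real)" where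
  "mapply k A x = (\<lambda>i. \<Sum>j<k. A i j * x j)"

definition mcomp :: "nat \<Rightarrow> (nat \<Rightarrow> nat \<Rightarrow> real) \<Rightarrow> (nat \<Rightarrow> nat \<Rightarrow> real) \<Rightarrow> (nat \<Rightarrow> nat \<Rightarrow> real)" where
  "mcomp k B A = (\<lambda>i j. \<Sum>p<k. B i p * A p j)"

definition Emb :: "nat \<Rightarrow> ((nat \<Rightarrow> real) \<Rightarrow> real) \<Rightarrow> nat \<Rightarrow> ((nat \<Rightarrow> real) \<Rightarrow> real)
                   \<Rightarrow> (nat \<Rightarrow> nat \<Rightarrow> real) set" where
  "Emb k N l M = {A. is_mat l k A \<and> (\<forall>x\<in>vec k. M (mapply k A x) = N x)}"

definition opdist :: "nat \<Rightarrow> ((nat \<Rightarrow> real) \<Rightarrow> real) \<Rightarrow> ((nat \<Rightarrow> real) \<Rightarrow> real)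
                      \<Rightarrow> (nat \<Rightarrow> nat \<Rightarrow> real) \<Rightarrow> (nat \<Rightarrow> nat \<Rightarrow> real) \<Rightarrow> real" where
  "opdist k N M A B =
     Sup {M (mapply k (\<lambda>i j. A i j - B i j) x) | x. x \<in> vec k \<and> N x \<le> 1}"

definition extreme_pt :: "(nat \<Rightarrow> real) \<Rightarrow> (nat \<Rightarrow> real) set \<Rightarrow> bool" where
  "extreme_pt x S \<longleftrightarrow> x \<in> S \<and>
     (\<forall>a\<in>S. \<forall>b\<in>S. \<forall>t. 0 < t \<and> t < 1 \<and> x = (\<lambda>i. (1 - t) * a i + t * b i) \<longrightarrow> a = b)"

definition unit_ball :: "nat \<Rightarrow> ((nat \<Rightarrow> real) \<Rightarrow> real) \<Rightarrow> (nat \<Rightarrow> real) set" where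
  "unit_ball k N = {x \<in> vec k. N x \<le> 1}"

text \<open>Dual space represented by coefficient vectors phi, acting as x |-> sum phi_j x_j.\<close>
definition dual_norm :: "nat \<Rightarrow> ((nat \<Rightarrow> real) \<Rightarrow> real) \<Rightarrow> (nat \<Rightarrow> real) \<Rightarrow> real" where
  "dual_norm k N \<phi> = Sup {\<bar>\<Sum>j<k. \<phi> j * x j\<bar> | x. x \<in> vec k \<and> N x \<le> 1}"

definition dual_ball :: "nat \<Rightarrow> ((nat \<Rightarrow> real) \<Rightarrow> real) \<Rightarrow> (nat \<Rightarrow> real) set" where
  "dual_ball k N = {\<phi> \<in> vec k. dual_norm k N \<phi> \<le> 1}"

definition polyhedral :: "nat \<Rightarrow> ((nat \<Rightarrow> real) \<Rightarrow> real) \<Rightarrow> bool" where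
  "polyhedral k N \<longleftrightarrow> is_norm k N \<and> finite {x. extreme_pt x (unit_ball k N)}"

definition Pol :: "nat \<Rightarrow> nat \<Rightarrow> ((nat \<Rightarrow> real) \<Rightarrow> real) \<Rightarrow> bool" where
  "Pol d k N \<longleftrightarrow> polyhedral k N \<and>
     finite {\<phi>. extreme_pt \<phi> (dual_ball k N)} \<and>
     card {\<phi>. extreme_pt \<phi> (dual_ball k N)} = 2 * d"

definition coloring :: "('a \<Rightarrow> nat) \<Rightarrow> nat \<Rightarrow> 'a set \<Rightarrow> bool" where
  "coloring c r M \<longleftrightarrow> (\<forall>A\<in>M. c A < r)"

definition eps_mono :: "('a \<Rightarrow> nat) \<Rightarrow> nat \<Rightarrow> ('a \<Rightarrow> 'a \<Rightarrow> real) \<Rightarrow> real \<Rightarrow> 'a set \<Rightarrow> 'a set \<Rightarrow> bool" where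
  "eps_mono c r dst \<epsilon> M S \<longleftrightarrow> (\<exists>i<r. \<forall>s\<in>S. \<exists>t\<in>M. c t = i \<and> dst s t \<le> \<epsilon>)"

definition least_enat :: "(nat \<Rightarrow> bool) \<Rightarrow> enat" where
  "least_enat P = (if \<exists>n. P n then enat (LEAST n. P n) else \<infinity>)"

definition n_inf_prop :: "nat \<Rightarrow> nat \<Rightarrow> nat \<Rightarrow> real \<Rightarrow> nat \<Rightarrow> bool" where
  "n_inf_prop d m r \<epsilon> n \<longleftrightarrow>
     (\<forall>c. coloring c r (Emb d (linf d) n (linf n)) \<longrightarrow>
        (\<exists>\<gamma>\<in>Emb m (linf m) n (linf n).
           eps_mono c r (opdist d (linf d) (linf n)) \<epsilon> (Emb d (linf d) n (linf n))
             (mcomp m \<gamma> ` Emb d (linf d) m (linf m))))"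

definition n_inf :: "nat \<Rightarrow> nat \<Rightarrow> nat \<Rightarrow> real \<Rightarrow> enat" where
  "n_inf d m r \<epsilon> = least_enat (n_inf_prop d m r \<epsilon>)"

definition n_pol_prop :: "nat \<Rightarrow> nat \<Rightarrow> nat \<Rightarrow> real \<Rightarrow> nat \<Rightarrow> bool" where
  "n_pol_prop d m r \<epsilon> n \<longleftrightarrow> m \<le> n \<and>
     (\<forall>kF NF kG NG. Pol d kF NF \<longrightarrow> Pol m kG NG \<longrightarrow>
       (\<forall>c. coloring c r (Emb kF NF n (linf n)) \<longrightarrow>
          (\<exists>T\<in>Emb kG NG n (linf n).
             eps_mono c r (opdist kF NF (linf n)) \<epsilon> (Emb kF NF n (linf n))
               (mcomp kG T ` Emb kF NF kG NG))))"

definition n_pol :: "nat \<Rightarrow> nat \<Rightarrow> nat \<Rightarrow> real \<Rightarrow> enat" where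
  "n_pol d m r \<epsilon> = least_enat (n_pol_prop d m r \<epsilon>)"

end

theory Submission
  imports Defs "HOL-Analysis.Analysis"
begin


lemma compact_box:
  fixes K :: "nat \<Rightarrow> real set"
  assumes "\<And>i. compact (K i)"
  shows "compact {x::nat\<Rightarrow>real. \<forall>i. x i \<in> K i}"
proof -
  have "compactin (product_topology (\<lambda>i. euclidean) UNIV) (PiE UNIV K)"
    using assms by (simp add: compactin_PiE)
  moreover have "PiE UNIV K = {x::nat\<Rightarrow>real. \<forall>i. x i \<in> K i}"
    by (auto simp: PiE_def Pi_def)
  ultimately show ?thesis
    by (simp add: euclidean_product_topology)
qed

lemma cont_coord: "continuous_on S (\<lambda>x::nat\<Rightarrow>real. x i)"
  by (rule continuous_on_subset[OF continuous_on_product_coordinates], simp)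

lemma cont_dot: "continuous_on S (\<lambda>x::nat\<Rightarrow>real. \<Sum>j<k. f j * x j)"
  by (intro continuous_intros cont_coord)

definition dot :: "nat \<Rightarrow> (nat\<Rightarrow>real) \<Rightarrow> (nat\<Rightarrow>real) \<Rightarrow> real" where
  "dot k a b = (\<Sum>j<k. a j * b j)"

definition unit :: "nat \<Rightarrow> nat \<Rightarrow> real" where
  "unit i = (\<lambda>j. if j = i then 1 else 0)"

definition cvx :: "(nat \<Rightarrow> real) set \<Rightarrow> bool" where
  "cvx S \<longleftrightarrow> (\<forall>a\<in>S. \<forall>b\<in>S. \<forall>t::real. 0 \<le> t \<and> t \<le> 1 \<longrightarrow> (\<lambda>i. (1 - t) * a i + t * b i) \<in> S)"

lemma vec_add: "x \<in> Defs.vec k \<Longrightarrow> y \<in> Defs.vec k \<Longrightarrow> (\<lambda>i. x i + y i) \<in> Defs.vec k"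
  by (simp add: Defs.vec_def)
lemma vec_diff: "x \<in> Defs.vec k \<Longrightarrow> y \<in> Defs.vec k \<Longrightarrow> (\<lambda>i. x i - y i) \<in> Defs.vec k"
  by (simp add: Defs.vec_def)
lemma vec_scale: "x \<in> Defs.vec k \<Longrightarrow> (\<lambda>i. c * x i) \<in> Defs.vec k"
  by (simp add: Defs.vec_def)
lemma vec_neg: "x \<in> Defs.vec k \<Longrightarrow> (\<lambda>i. - x i) \<in> Defs.vec k"
  by (simp add: Defs.vec_def)
lemma vec_zero[simp]: "(\<lambda>i. 0) \<in> Defs.vec k"
  by (simp add: Defs.vec_def)
lemma vec_comb: "x \<in> Defs.vec k \<Longrightarrow> y \<in> Defs.vec k \<Longrightarrow> (\<lambda>i. a * x i + b * y i) \<in> Defs.vec k"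
  by (simp add: Defs.vec_def)
lemma vec_unit: "i < k \<Longrightarrow> unit i \<in> Defs.vec k"
  by (simp add: Defs.vec_def unit_def)
lemma vec_eqI: "x \<in> Defs.vec k \<Longrightarrow> y \<in> Defs.vec k \<Longrightarrow> (\<And>i. i < k \<Longrightarrow> x i = y i) \<Longrightarrow> x = y"
proof (rule ext)
  fix i assume a: "x \<in> Defs.vec k" "y \<in> Defs.vec k" "\<And>i. i < k \<Longrightarrow> x i = y i"
  show "x i = y i"
  proof (cases "i < k")
    case True then show ?thesis using a by simp
  next
    case False then show ?thesis using a(1,2) by (simp add: Defs.vec_def)
  qed
qed
lemma vec_zeroI: "x \<in> Defs.vec k \<Longrightarrow> i \<ge> k \<Longrightarrow> x i = 0"
  by (simp add: Defs.vec_def)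

lemma closed_vec: "closed (Defs.vec k)"
proof -
  have "Defs.vec k = (\<Inter>i\<in>{i. k \<le> i}. {x::nat\<Rightarrow>real. x i = 0})"
    by (auto simp: Defs.vec_def)
  moreover have "closed {x::nat\<Rightarrow>real. x i = 0}" for i
    by (rule closed_Collect_eq[OF cont_coord continuous_on_const])
  ultimately show ?thesis by (metis (no_types, lifting) closed_INT)
qed

lemma dot_add: "dot k a (\<lambda>i. x i + y i) = dot k a x + dot k a y"
  by (simp add: dot_def distrib_left sum.distrib)
lemma dot_diff: "dot k a (\<lambda>i. x i - y i) = dot k a x - dot k a y"
  by (simp add: dot_def right_diff_distrib sum_subtractf)
lemma dot_scale: "dot k a (\<lambda>i. c * x i) = c * dot k a x"
  by (simp add: dot_def sum_distrib_left mult.left_commute)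
lemma dot_neg: "dot k a (\<lambda>i. - x i) = - dot k a x"
  by (simp add: dot_def sum_negf)
lemma dot_lscale: "dot k (\<lambda>i. c * a i) x = c * dot k a x"
  by (simp add: dot_def sum_distrib_left mult.assoc)
lemma dot_lneg: "dot k (\<lambda>i. - a i) x = - dot k a x"
  by (simp add: dot_def sum_negf)
lemma dot_comm: "dot k a b = dot k b a"
  by (simp add: dot_def mult.commute)
lemma dot_zero[simp]: "dot k a (\<lambda>i. 0) = 0" "dot k (\<lambda>i. 0) a = 0"
  by (simp_all add: dot_def)
lemma dot_unit: "i < k \<Longrightarrow> dot k a (unit i) = a i"
proof -
  assume i: "i < k"
  have "dot k a (unit i) = (\<Sum>j<k. if j = i then a j else 0)"
    unfolding dot_def unit_def by (rule sum.cong) auto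
  also have "\<dots> = a i" using i by (simp add: sum.delta)
  finally show ?thesis .
qed

lemma dot_abs_le: "\<bar>dot k a x\<bar> \<le> (\<Sum>j<k. \<bar>a j\<bar> * \<bar>x j\<bar>)"
  unfolding dot_def by (rule order_trans[OF sum_abs]) (simp add: abs_mult)

section \<open>Norms\<close>

locale nrm =
  fixes k :: nat and N :: "(nat \<Rightarrow> real) \<Rightarrow> real"
  assumes isn: "is_norm k N"
begin

lemma N_nonneg: "x \<in> Defs.vec k \<Longrightarrow> 0 \<le> N x"
  using isn by (simp add: is_norm_def)
lemma N_scale: "x \<in> Defs.vec k \<Longrightarrow> N (\<lambda>i. c * x i) = \<bar>c\<bar> * N x"
  using isn by (simp add: is_norm_def)
lemma N_tri: "x \<in> Defs.vec k \<Longrightarrow> y \<in> Defs.vec k \<Longrightarrow> N (\<lambda>i. x i + y i) \<le> N x + N y"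
  using isn by (simp add: is_norm_def)
lemma N_def0: "x \<in> Defs.vec k \<Longrightarrow> N x = 0 \<Longrightarrow> x = (\<lambda>i. 0)"
  using isn by (simp add: is_norm_def)
lemma N0[simp]: "N (\<lambda>i. 0) = 0"
  using N_scale[of "\<lambda>i. 0" 0] by simp
lemma N_pos: "x \<in> Defs.vec k \<Longrightarrow> x \<noteq> (\<lambda>i. 0) \<Longrightarrow> 0 < N x"
  using N_nonneg N_def0 by force
lemma N_neg: "x \<in> Defs.vec k \<Longrightarrow> N (\<lambda>i. - x i) = N x"
  using N_scale[of x "-1"] by simp
lemma N_diff_ge: "x \<in> Defs.vec k \<Longrightarrow> y \<in> Defs.vec k \<Longrightarrow> N x - N y \<le> N (\<lambda>i. x i - y i)"
  using N_tri[of y "\<lambda>i. x i - y i"] vec_diff[of x k y] by simp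
lemma N_diff_abs: "x \<in> Defs.vec k \<Longrightarrow> y \<in> Defs.vec k \<Longrightarrow> \<bar>N x - N y\<bar> \<le> N (\<lambda>i. x i - y i)"
proof -
  assume a: "x \<in> Defs.vec k" "y \<in> Defs.vec k"
  have "N (\<lambda>i. y i - x i) = N (\<lambda>i. x i - y i)"
    using N_neg[OF vec_diff[OF a]] by simp
  then show ?thesis using N_diff_ge[OF a] N_diff_ge[OF a(2,1)] by linarith
qed

lemma N_le_sum_aux:
  assumes x: "x \<in> Defs.vec k"
  shows "p \<le> k \<Longrightarrow> N (\<lambda>i. if i < p then x i else 0) \<le> (\<Sum>i<p. \<bar>x i\<bar> * N (unit i))"
proof (induction p)
  case 0 then show ?case by simp
next
  case (Suc p)
  let ?t = "\<lambda>i. if i < p then x i else 0"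
  have e: "(\<lambda>i. if i < Suc p then x i else 0) = (\<lambda>i. ?t i + x p * unit p i)"
    by (rule ext) (simp add: unit_def less_Suc_eq)
  have v1: "?t \<in> Defs.vec k" using Suc.prems by (simp add: Defs.vec_def)
  have v2: "(\<lambda>i. x p * unit p i) \<in> Defs.vec k" using Suc.prems by (intro vec_scale vec_unit) simp
  have "N (\<lambda>i. ?t i + x p * unit p i) \<le> N ?t + N (\<lambda>i. x p * unit p i)"
    using N_tri[OF v1 v2] .
  also have "N (\<lambda>i. x p * unit p i) = \<bar>x p\<bar> * N (unit p)"
    using Suc.prems by (intro N_scale vec_unit) simp
  finally show ?case using Suc by (simp add: e)
qed

lemma N_le_sum: "x \<in> Defs.vec k \<Longrightarrow> N x \<le> (\<Sum>i<k. \<bar>x i\<bar> * N (unit i))"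
proof -
  assume x: "x \<in> Defs.vec k"
  have "(\<lambda>i. if i < k then x i else 0) = x" using x by (auto simp: Defs.vec_def)
  then show ?thesis using N_le_sum_aux[OF x, of k] by simp
qed

lemma N_cont: "continuous_on (Defs.vec k) N"
proof (clarsimp simp: continuous_on_eq_continuous_within continuous_within)
  fix z assume z: "z \<in> Defs.vec k"
  let ?g = "\<lambda>y. (\<Sum>i<k. \<bar>y i - z i\<bar> * N (unit i))"
  have gc: "continuous_on (Defs.vec k) ?g"
    by (intro continuous_intros cont_coord)
  have "(?g \<longlongrightarrow> ?g z) (at z within Defs.vec k)"
    using gc z unfolding continuous_on_def by blast
  then have g0: "(?g \<longlongrightarrow> 0) (at z within Defs.vec k)" by simp
  have ev: "\<forall>\<^sub>F y in at z within Defs.vec k. norm (N y - N z) \<le> ?g y"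
  proof -
    have "norm (N y - N z) \<le> ?g y" if "y \<in> Defs.vec k" for y
    proof -
      have "norm (N y - N z) \<le> N (\<lambda>i. y i - z i)" using N_diff_abs[OF that z] by simp
      also have "\<dots> \<le> ?g y" using N_le_sum[OF vec_diff[OF that z]] by simp
      finally show ?thesis .
    qed
    then show ?thesis by (auto simp: eventually_at_filter)
  qed
  have "((\<lambda>y. N y - N z) \<longlongrightarrow> 0) (at z within Defs.vec k)"
    by (rule Lim_null_comparison[OF ev g0])
  then show "(N \<longlongrightarrow> N z) (at z within Defs.vec k)"
    by (rule LIM_zero_cancel)
qed

end


lemma compact_closed_sub: "compact K \<Longrightarrow> closed S \<Longrightarrow> S \<subseteq> K \<Longrightarrow> compact S"
  by (metis compact_Int_closed inf.absorb_iff2)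

lemma sq_le_bound: "(a::real)^2 \<le> M \<Longrightarrow> \<bar>a\<bar> \<le> M + 1"
proof (rule ccontr)
  assume h: "a^2 \<le> M" "\<not> \<bar>a\<bar> \<le> M + 1"
  have "0 \<le> a^2" by simp
  then have M: "0 \<le> M" using h by linarith
  have "\<bar>a\<bar> * 1 < \<bar>a\<bar> * \<bar>a\<bar>" using h M by (intro mult_strict_left_mono) auto
  then have "\<bar>a\<bar> < a^2" by (simp add: power2_eq_square abs_mult_self_eq)
  then show False using h by linarith
qed

lemma cont_dotL: "continuous_on S (\<lambda>\<phi>. dot k \<phi> x)"
  unfolding dot_def by (intro continuous_intros cont_coord)
lemma cont_dotR: "continuous_on S (\<lambda>x. dot k \<phi> x)"
  unfolding dot_def by (intro continuous_intros cont_coord)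

lemma dot_comb_left:
  "dot k (\<lambda>i. a * x i + b * y i) z = a * dot k x z + b * dot k y z"
  by (simp add: dot_def distrib_right sum.distrib sum_distrib_left mult.assoc)

section \<open>Separation\<close>

lemma separation:
  assumes C: "C \<subseteq> Defs.vec k" "closed C" "cvx C" "C \<noteq> {}"
    and th: "\<theta> \<in> Defs.vec k" "\<theta> \<notin> C"
  shows "\<exists>z\<in>Defs.vec k. \<forall>c\<in>C. dot k z c < dot k z \<theta>"
proof -
  obtain c0 where c0: "c0 \<in> C" using C(4) by auto
  define f where "f c = (\<Sum>i<k. (\<theta> i - c i)^2)" for c
  have fc: "continuous_on S f" for S unfolding f_def by (intro continuous_intros cont_coord)
  define R where "R = f c0 + 1"
  define C0 where "C0 = C \<inter> {c. f c \<le> f c0}"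
  define K where "K i = (if i < k then {\<theta> i - R .. \<theta> i + R} else {0::real})" for i
  have cK: "compact {x::nat\<Rightarrow>real. \<forall>i. x i \<in> K i}"
    by (rule compact_box) (simp add: K_def)
  have "closed C0" unfolding C0_def
    by (intro closed_Int C(2) closed_Collect_le fc continuous_on_const)
  moreover have "C0 \<subseteq> {x. \<forall>i. x i \<in> K i}"
  proof (clarsimp)
    fix c i assume c: "c \<in> C0"
    show "c i \<in> K i"
    proof (cases "i < k")
      case True
      have "(\<theta> i - c i)^2 \<le> f c" unfolding f_def
        by (rule member_le_sum[where f="\<lambda>i. (\<theta> i - c i)^2"]) (use True in auto)
      also have "\<dots> \<le> f c0" using c by (simp add: C0_def)
      finally have "\<bar>\<theta> i - c i\<bar> \<le> R" unfolding R_def by (rule sq_le_bound)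
      then show ?thesis using True by (simp add: K_def abs_le_iff)
    next
      case False
      then show ?thesis using c C(1) by (auto simp: K_def C0_def Defs.vec_def)
    qed
  qed
  ultimately have "compact C0" using cK compact_closed_sub by blast
  moreover have "C0 \<noteq> {}" using c0 by (auto simp: C0_def)
  ultimately obtain cs where cs: "cs \<in> C0" "\<And>y. y \<in> C0 \<Longrightarrow> f cs \<le> f y"
    using continuous_attains_inf[of C0 f] fc by blast
  have csC: "cs \<in> C" using cs by (simp add: C0_def)
  have fmin: "f cs \<le> f c" if "c \<in> C" for c
  proof (cases "f c \<le> f c0")
    case True then show ?thesis using cs that by (simp add: C0_def)
  next
    case False then show ?thesis using cs(2)[of c0] c0 by (simp add: C0_def)
  qed
  define z where "z = (\<lambda>i. \<theta> i - cs i)"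
  have zv: "z \<in> Defs.vec k" unfolding z_def using th(1) csC C(1) by (intro vec_diff) auto
  have var: "dot k z (\<lambda>i. c i - cs i) \<le> 0" if c: "c \<in> C" for c
  proof (rule ccontr)
    define A where "A = dot k z (\<lambda>i. c i - cs i)"
    define Q where "Q = (\<Sum>i<k. (c i - cs i)^2)"
    assume "\<not> dot k z (\<lambda>i. c i - cs i) \<le> 0"
    then have A: "A > 0" by (simp add: A_def)
    have Q: "Q \<ge> 0" unfolding Q_def by (intro sum_nonneg) simp
    have key: "2 * A \<le> t * Q" if t: "0 < t" "t \<le> 1" for t
    proof -
      have "(\<lambda>i. (1 - t) * cs i + t * c i) \<in> C"
        using C(3) csC c t unfolding cvx_def by auto
      then have le: "f cs \<le> f (\<lambda>i. (1 - t) * cs i + t * c i)" by (rule fmin)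
      have "f (\<lambda>i. (1 - t) * cs i + t * c i)
            = (\<Sum>i<k. (\<theta> i - cs i)^2 - 2 * t * (z i * (c i - cs i)) + t^2 * (c i - cs i)^2)"
        unfolding f_def z_def by (rule sum.cong) (auto simp: power2_eq_square algebra_simps)
      also have "\<dots> = f cs - 2 * t * A + t^2 * Q"
        unfolding f_def A_def Q_def dot_def
        by (simp add: sum.distrib sum_subtractf sum_distrib_left mult.assoc)
      finally have "0 \<le> t * (t * Q - 2 * A)" using le by (simp add: power2_eq_square algebra_simps)
      then show ?thesis using t by (simp add: zero_le_mult_iff)
    qed
    define t where "t = min 1 (A / (Q + 1))"
    have t: "0 < t" "t \<le> 1" using A Q by (auto simp: t_def)
    have "t * Q \<le> (A / (Q + 1)) * Q" using Q by (intro mult_right_mono) (auto simp: t_def)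
    also have "\<dots> < A" using A Q by (simp add: field_simps)
    finally show False using key[OF t] A by linarith
  qed
  show ?thesis
  proof (intro bexI[OF _ zv] ballI)
    fix c assume c: "c \<in> C"
    have "dot k z c = dot k z cs + dot k z (\<lambda>i. c i - cs i)" by (simp add: dot_diff)
    also have "\<dots> \<le> dot k z cs" using var[OF c] by simp
    also have "\<dots> < dot k z \<theta>"
    proof -
      have "dot k z \<theta> - dot k z cs = dot k z (\<lambda>i. \<theta> i - cs i)"
        by (rule dot_diff[symmetric])
      also have "\<dots> = (\<Sum>i<k. (z i)^2)"
        by (simp add: dot_def z_def power2_eq_square)
      finally have "dot k z \<theta> - dot k z cs = (\<Sum>i<k. (z i)^2)" .
      moreover have "(\<Sum>i<k. (z i)^2) > 0"
      proof -
        have "\<theta> \<noteq> cs" using th(2) csC by auto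
        then obtain i where i: "i < k" "\<theta> i \<noteq> cs i"
          using vec_eqI[OF th(1), of cs] csC C(1) by blast
        have "(\<Sum>i<k. (z i)^2) \<ge> (z i)^2"
          by (rule member_le_sum[where f="\<lambda>i. (z i)^2"]) (use i in auto)
        moreover have "(z i)^2 > 0" using i by (simp add: z_def)
        ultimately show ?thesis by linarith
      qed
      ultimately show ?thesis by linarith
    qed
    finally show "dot k z c < dot k z \<theta>" .
  qed
qed

section \<open>Extreme points maximizing a functional\<close>

lemma extreme_max:
  assumes K: "K \<subseteq> Defs.vec k" "compact K" "cvx K" "K \<noteq> {}"
  shows "\<exists>\<phi>\<in>K. extreme_pt \<phi> K \<and> (\<forall>\<psi>\<in>K. dot k \<psi> x \<le> dot k \<phi> x)"
proof -
  obtain p0 where p0: "p0 \<in> K" "\<And>y. y \<in> K \<Longrightarrow> dot k y x \<le> dot k p0 x"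
    using continuous_attains_sup[OF K(2) K(4) cont_dotL] by blast
  define M where "M = dot k p0 x"
  define K' where "K' = K \<inter> {\<psi>. dot k \<psi> x = M}"
  have "closed {\<psi>. dot k \<psi> x = M}"
    by (intro closed_Collect_eq cont_dotL continuous_on_const)
  then have cK': "compact K'" unfolding K'_def using K(2) by (rule compact_Int_closed[rotated])
  have "K' \<noteq> {}" using p0 by (auto simp: K'_def M_def)
  define q where "q \<psi> = (\<Sum>i<k. (\<psi> i)^2)" for \<psi> :: "nat \<Rightarrow> real"
  have qc: "continuous_on K' q" unfolding q_def by (intro continuous_intros cont_coord)
  obtain \<phi> where phi: "\<phi> \<in> K'" "\<And>y. y \<in> K' \<Longrightarrow> q y \<le> q \<phi>"
    using continuous_attains_sup[OF cK' \<open>K' \<noteq> {}\<close> qc] by blast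
  have phiK: "\<phi> \<in> K" and phiM: "dot k \<phi> x = M" using phi by (auto simp: K'_def)
  have ext: "extreme_pt \<phi> K"
    unfolding extreme_pt_def
  proof (intro conjI phiK ballI allI impI)
    fix a b t assume ab: "a \<in> K" "b \<in> K" and t: "0 < t \<and> t < 1 \<and> \<phi> = (\<lambda>i. (1 - t) * a i + t * b i)"
    have ga: "dot k a x \<le> M" "dot k b x \<le> M" using ab p0 by (auto simp: M_def)
    have "M = (1 - t) * dot k a x + t * dot k b x"
      using phiM t by (simp add: dot_comb_left)
    then have e0: "(1 - t) * (M - dot k a x) + t * (M - dot k b x) = 0"
      by (simp add: algebra_simps)
    have t0: "0 < t" "t < 1" using t by auto
    have n1: "(1 - t) * (M - dot k a x) \<ge> 0" "t * (M - dot k b x) \<ge> 0"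
      using ga t0 by (intro mult_nonneg_nonneg; simp)+
    then have z1: "(1 - t) * (M - dot k a x) = 0" and z2: "t * (M - dot k b x) = 0"
      using e0 by linarith+
    have "dot k a x = M \<and> dot k b x = M" using z1 z2 t0 by simp
    then have abK': "a \<in> K'" "b \<in> K'" using ab by (auto simp: K'_def)
    have id: "q \<phi> = (1 - t) * q a + t * q b - t * (1 - t) * (\<Sum>i<k. (a i - b i)^2)"
    proof -
      have "q \<phi> = (\<Sum>i<k. (1 - t) * (a i)^2 + t * (b i)^2 - t * (1 - t) * (a i - b i)^2)"
        unfolding q_def using t by (intro sum.cong) (auto simp: power2_eq_square algebra_simps)
      then show ?thesis unfolding q_def
        by (simp add: sum.distrib sum_subtractf sum_distrib_left)
    qed
    have "q a \<le> q \<phi>" "q b \<le> q \<phi>" using phi(2) abK' by auto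
    then have "(1 - t) * q a \<le> (1 - t) * q \<phi>" "t * q b \<le> t * q \<phi>"
      using t0 by (intro mult_left_mono; simp)+
    then have "(1 - t) * q a + t * q b \<le> q \<phi>"
      by (simp add: algebra_simps)
    then have "t * (1 - t) * (\<Sum>i<k. (a i - b i)^2) \<le> 0" using id by linarith
    moreover have "t * (1 - t) > 0" using t by simp
    ultimately have "(\<Sum>i<k. (a i - b i)^2) \<le> 0"
      by (metis mult_pos_pos not_le)
    then have s0: "(\<Sum>i<k. (a i - b i)^2) = 0"
      by (meson antisym sum_nonneg zero_le_power2)
    have "a i = b i" if "i < k" for i
    proof -
      have "(a i - b i)^2 = 0"
        using s0 sum_nonneg_eq_0_iff[of "{..<k}" "\<lambda>i. (a i - b i)^2"] that by simp
      then show ?thesis by simp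
    qed
    then show "a = b" using vec_eqI ab K(1) by blast
  qed
  show ?thesis
    using phiK ext p0(2) phiM by (auto simp: M_def)
qed


definition neg :: "(nat \<Rightarrow> real) \<Rightarrow> nat \<Rightarrow> real" where
  "neg x = (\<lambda>i. - x i)"

lemma neg_neg[simp]: "neg (neg x) = x" by (simp add: neg_def)
lemma neg_vec: "x \<in> Defs.vec k \<Longrightarrow> neg x \<in> Defs.vec k" by (simp add: neg_def Defs.vec_def)
lemma dot_negL: "dot k (neg a) x = - dot k a x" by (simp add: neg_def dot_lneg)

lemma extreme_neg:
  assumes S: "\<And>x. x \<in> S \<Longrightarrow> neg x \<in> S" and e: "extreme_pt \<phi> S"
  shows "extreme_pt (neg \<phi>) S"
  unfolding extreme_pt_def
proof (intro conjI ballI allI impI)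
  show "neg \<phi> \<in> S" using e S by (simp add: extreme_pt_def)
  fix a b t assume ab: "a \<in> S" "b \<in> S" and t: "0 < t \<and> t < 1 \<and> neg \<phi> = (\<lambda>i. (1 - t) * a i + t * b i)"
  have "\<phi> = (\<lambda>i. (1 - t) * neg a i + t * neg b i)"
  proof (rule ext)
    fix i
    have "neg \<phi> i = (1 - t) * a i + t * b i" using t by simp
    then show "\<phi> i = (1 - t) * neg a i + t * neg b i" by (simp add: neg_def)
  qed
  then have "neg a = neg b" using e S[OF ab(1)] S[OF ab(2)] t unfolding extreme_pt_def by blast
  then show "a = b" by (metis neg_neg)
qed

context nrm
begin

lemma N_lower: "\<exists>C>0. \<forall>x\<in>Defs.vec k. \<forall>j. \<bar>x j\<bar> \<le> C * N x"
proof (cases "k = 0")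
  case True
  show ?thesis
  proof (intro exI[of _ 1] conjI ballI allI)
    fix x j assume "x \<in> Defs.vec k"
    then show "\<bar>x j\<bar> \<le> 1 * N x" using True N_nonneg by (simp add: Defs.vec_def)
  qed simp
next
  case False
  define K where "K i = (if i < k then {-1..1} else {0::real})" for i
  define S where "S = {x::nat\<Rightarrow>real. \<forall>i. x i \<in> K i} \<inter> (\<Union>i<k. {x. \<bar>x i\<bar> = 1})"
  have cb: "compact {x::nat\<Rightarrow>real. \<forall>i. x i \<in> K i}" by (rule compact_box) (simp add: K_def)
  have "closed (\<Union>i<k. {x::nat\<Rightarrow>real. \<bar>x i\<bar> = 1})"
    by (intro closed_UN finite_lessThan ballI closed_Collect_eq continuous_intros cont_coord)
  then have cS: "compact S" unfolding S_def using cb by (rule compact_Int_closed[rotated])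
  have Sv: "S \<subseteq> Defs.vec k"
  proof
    fix x assume "x \<in> S"
    then have xK: "\<forall>i. x i \<in> K i" by (simp add: S_def)
    show "x \<in> Defs.vec k" unfolding Defs.vec_def
    proof (intro CollectI allI impI)
      fix i assume "k \<le> i"
      then show "x i = 0" using xK[rule_format, of i] by (simp add: K_def)
    qed
  qed
  have "unit 0 \<in> S" using False by (auto simp: S_def K_def unit_def)
  then have Sne: "S \<noteq> {}" by auto
  obtain x0 where x0: "x0 \<in> S" "\<And>y. y \<in> S \<Longrightarrow> N x0 \<le> N y"
    using continuous_attains_inf[OF cS Sne continuous_on_subset[OF N_cont Sv]] by blast
  have "x0 \<noteq> (\<lambda>i. 0)" using x0(1) by (auto simp: S_def)
  then have c: "N x0 > 0" using N_pos x0(1) Sv by auto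
  show ?thesis
  proof (intro exI[of _ "1 / N x0"] conjI ballI allI)
    show "0 < 1 / N x0" using c by simp
    fix x j assume x: "x \<in> Defs.vec k"
    show "\<bar>x j\<bar> \<le> 1 / N x0 * N x"
    proof (cases "x = (\<lambda>i. 0)")
      case True then show ?thesis by simp
    next
      case xnz: False
      define A where "A = (\<lambda>i. \<bar>x i\<bar>) ` {..<k}"
      define \<mu> where "\<mu> = Max A"
      have fA: "finite A" "A \<noteq> {}" using False by (auto simp: A_def)
      obtain i0 where i0: "i0 < k" "\<bar>x i0\<bar> = \<mu>" using Max_in[OF fA] by (auto simp: \<mu>_def A_def)
      have xle: "\<bar>x i\<bar> \<le> \<mu>" if "i < k" for i using Max_ge[OF fA(1)] that by (auto simp: \<mu>_def A_def)
      obtain i1 where i1: "i1 < k" "x i1 \<noteq> 0"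
        using xnz vec_eqI[OF x vec_zero] by auto
      have mu: "\<mu> > 0" using xle[OF i1(1)] i1(2) by linarith
      define y where "y = (\<lambda>i. (1 / \<mu>) * x i)"
      have "y \<in> S"
      proof -
        have "y i \<in> K i" for i
        proof (cases "i < k")
          case True
          have "\<bar>y i\<bar> \<le> 1" using xle[OF True] mu by (simp add: y_def abs_mult field_simps)
          then show ?thesis using True by (simp add: K_def abs_le_iff)
        next
          case False then show ?thesis using x by (simp add: K_def y_def Defs.vec_def)
        qed
        moreover have "\<bar>y i0\<bar> = 1" using i0 mu by (simp add: y_def abs_mult)
        ultimately show ?thesis using i0 by (auto simp: S_def)
      qed
      then have "N x0 \<le> N y" by (rule x0(2))
      also have "N y = \<bar>1 / \<mu>\<bar> * N x" unfolding y_def by (rule N_scale[OF x])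
      also have "\<bar>1 / \<mu>\<bar> * N x = (1 / \<mu>) * N x" using mu by simp
      finally have "\<mu> * N x0 \<le> N x" using mu by (simp add: field_simps)
      then have mle: "\<mu> \<le> 1 / N x0 * N x" using c by (simp add: field_simps)
      show ?thesis
      proof (cases "j < k")
        case True then show ?thesis using xle[OF True] mle by linarith
      next
        case False then show ?thesis using x c N_nonneg[OF x] by (simp add: Defs.vec_def)
      qed
    qed
  qed
qed

end

context nrm begin
lemma bdd_dual: "bdd_above {\<bar>\<Sum>j<k. \<phi> j * x j\<bar> |x. x \<in> Defs.vec k \<and> N x \<le> 1}"
proof -
  obtain C where C: "C > 0" "\<And>x j. x \<in> Defs.vec k \<Longrightarrow> \<bar>x j\<bar> \<le> C * N x"
    using N_lower by blast
  show ?thesis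
  proof (rule bdd_aboveI[of _ "(\<Sum>j<k. \<bar>\<phi> j\<bar>) * C"], clarify)
    fix x assume x: "x \<in> Defs.vec k" "N x \<le> 1"
    have "\<bar>\<Sum>j<k. \<phi> j * x j\<bar> \<le> (\<Sum>j<k. \<bar>\<phi> j\<bar> * \<bar>x j\<bar>)"
      using dot_abs_le[of k \<phi> x] by (simp add: dot_def)
    also have "\<dots> \<le> (\<Sum>j<k. \<bar>\<phi> j\<bar> * C)"
    proof (rule sum_mono)
      fix j
      have "\<bar>x j\<bar> \<le> C" using C(2)[OF x(1), of j] x(2) C(1)
        by (meson mult_left_le order_trans less_imp_le N_nonneg[OF x(1)])
      then show "\<bar>\<phi> j\<bar> * \<bar>x j\<bar> \<le> \<bar>\<phi> j\<bar> * C" by (simp add: mult_left_mono)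
    qed
    also have "\<dots> = (\<Sum>j<k. \<bar>\<phi> j\<bar>) * C" by (simp add: sum_distrib_right)
    finally show "\<bar>\<Sum>j<k. \<phi> j * x j\<bar> \<le> (\<Sum>j<k. \<bar>\<phi> j\<bar>) * C" .
  qed
qed

lemma Dchar: "\<phi> \<in> dual_ball k N \<longleftrightarrow> \<phi> \<in> Defs.vec k \<and> (\<forall>x\<in>Defs.vec k. \<bar>dot k \<phi> x\<bar> \<le> N x)"
proof
  assume h: "\<phi> \<in> dual_ball k N"
  then have v: "\<phi> \<in> Defs.vec k" and dn: "dual_norm k N \<phi> \<le> 1" by (auto simp: dual_ball_def)
  have le: "\<bar>dot k \<phi> x\<bar> \<le> N x" if x: "x \<in> Defs.vec k" for x
  proof (cases "N x = 0")
    case True then show ?thesis using N_def0[OF x] by simp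
  next
    case False
    then have p: "N x > 0" using N_nonneg[OF x] by simp
    define y where "y = (\<lambda>i. (1 / N x) * x i)"
    have yv: "y \<in> Defs.vec k" unfolding y_def by (rule vec_scale[OF x])
    have "N y = \<bar>1 / N x\<bar> * N x" unfolding y_def by (rule N_scale[OF x])
    then have Ny: "N y = 1" using p by simp
    have "\<bar>\<Sum>j<k. \<phi> j * y j\<bar> \<le> dual_norm k N \<phi>"
      unfolding dual_norm_def
      by (rule cSup_upper[OF _ bdd_dual]) (use yv Ny in auto)
    then have "\<bar>dot k \<phi> y\<bar> \<le> 1" using dn by (simp add: dot_def)
    moreover have "dot k \<phi> y = (1 / N x) * dot k \<phi> x" unfolding y_def by (rule dot_scale)
    ultimately have "(1 / N x) * \<bar>dot k \<phi> x\<bar> \<le> 1" using p by (simp add: abs_mult)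
    then show ?thesis using p by (simp add: field_simps)
  qed
  show "\<phi> \<in> Defs.vec k \<and> (\<forall>x\<in>Defs.vec k. \<bar>dot k \<phi> x\<bar> \<le> N x)" using v le by blast
next
  assume h: "\<phi> \<in> Defs.vec k \<and> (\<forall>x\<in>Defs.vec k. \<bar>dot k \<phi> x\<bar> \<le> N x)"
  have "dual_norm k N \<phi> \<le> 1"
    unfolding dual_norm_def
  proof (rule cSup_least)
    show "{\<bar>\<Sum>j<k. \<phi> j * x j\<bar> |x. x \<in> Defs.vec k \<and> N x \<le> 1} \<noteq> {}"
      by (auto intro!: exI[of _ "\<lambda>i. 0"])
    fix v assume "v \<in> {\<bar>\<Sum>j<k. \<phi> j * x j\<bar> |x. x \<in> Defs.vec k \<and> N x \<le> 1}"
    then obtain x where x: "x \<in> Defs.vec k" "N x \<le> 1" "v = \<bar>dot k \<phi> x\<bar>" by (auto simp: dot_def)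
    then show "v \<le> 1" using h by force
  qed
  then show "\<phi> \<in> dual_ball k N" using h by (simp add: dual_ball_def)
qed

lemma D_vec: "\<phi> \<in> dual_ball k N \<Longrightarrow> \<phi> \<in> Defs.vec k"
  using Dchar by blast
lemma D_le: "\<phi> \<in> dual_ball k N \<Longrightarrow> x \<in> Defs.vec k \<Longrightarrow> \<bar>dot k \<phi> x\<bar> \<le> N x"
  using Dchar by blast
lemma D_zero: "(\<lambda>i. 0) \<in> dual_ball k N"
  using Dchar N_nonneg by simp
lemma D_neg: "\<phi> \<in> dual_ball k N \<Longrightarrow> neg \<phi> \<in> dual_ball k N"
  using Dchar neg_vec dot_negL by (metis abs_minus_cancel)

lemma D_cvx: "cvx (dual_ball k N)"
  unfolding cvx_def
proof (intro ballI allI impI)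
  fix a b and t :: real assume ab: "a \<in> dual_ball k N" "b \<in> dual_ball k N" and t: "0 \<le> t \<and> t \<le> 1"
  show "(\<lambda>i. (1 - t) * a i + t * b i) \<in> dual_ball k N"
    unfolding Dchar
  proof (intro conjI ballI)
    show "(\<lambda>i. (1 - t) * a i + t * b i) \<in> Defs.vec k" using ab by (intro vec_comb D_vec)
    fix x assume x: "x \<in> Defs.vec k"
    have "\<bar>dot k (\<lambda>i. (1 - t) * a i + t * b i) x\<bar> = \<bar>(1 - t) * dot k a x + t * dot k b x\<bar>"
      by (simp add: dot_comb_left)
    also have "\<dots> \<le> (1 - t) * \<bar>dot k a x\<bar> + t * \<bar>dot k b x\<bar>"
      using t by (metis abs_mult abs_of_nonneg abs_triangle_ineq diff_ge_0_iff_ge)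
    also have "\<dots> \<le> (1 - t) * N x + t * N x"
      using t D_le[OF ab(1) x] D_le[OF ab(2) x] by (intro add_mono mult_left_mono) auto
    finally show "\<bar>dot k (\<lambda>i. (1 - t) * a i + t * b i) x\<bar> \<le> N x" by (simp add: algebra_simps)
  qed
qed

lemma D_compact: "compact (dual_ball k N)"
proof -
  define K where "K i = (if i < k then {- N (unit i) .. N (unit i)} else {0::real})" for i
  have cb: "compact {x::nat\<Rightarrow>real. \<forall>i. x i \<in> K i}" by (rule compact_box) (simp add: K_def)
  have eq: "dual_ball k N = Defs.vec k \<inter> (\<Inter>x\<in>Defs.vec k. {\<phi>. \<bar>dot k \<phi> x\<bar> \<le> N x})"
    using Dchar by blast
  have "closed (dual_ball k N)" unfolding eq
    by (intro closed_Int closed_vec closed_INT ballI closed_Collect_le continuous_intros cont_dotL)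
  moreover have "dual_ball k N \<subseteq> {x. \<forall>i. x i \<in> K i}"
  proof clarify
    fix \<phi> i assume p: "\<phi> \<in> dual_ball k N"
    show "\<phi> i \<in> K i"
    proof (cases "i < k")
      case True
      have "\<bar>\<phi> i\<bar> \<le> N (unit i)" using D_le[OF p vec_unit[OF True]] dot_unit[OF True] by simp
      then show ?thesis using True by (simp add: K_def abs_le_iff)
    next
      case False then show ?thesis using D_vec[OF p] by (simp add: K_def Defs.vec_def)
    qed
  qed
  ultimately show ?thesis using cb compact_closed_sub by blast
qed

end

context nrm begin
definition Bset where "Bset = {x \<in> Defs.vec k. N x \<le> 1}"

lemma B_closed: "closed Bset"
proof -
  have "Bset = Defs.vec k \<inter> N -` {..1}" by (auto simp: Bset_def)
  then show ?thesis using continuous_closed_preimage[OF N_cont closed_vec] by simp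
qed

lemma B_cvx: "cvx Bset"
  unfolding cvx_def
proof (intro ballI allI impI)
  fix a b and t :: real assume ab: "a \<in> Bset" "b \<in> Bset" and t: "0 \<le> t \<and> t \<le> 1"
  have v: "a \<in> Defs.vec k" "b \<in> Defs.vec k" using ab by (auto simp: Bset_def)
  have "N (\<lambda>i. (1 - t) * a i + t * b i) \<le> N (\<lambda>i. (1 - t) * a i) + N (\<lambda>i. t * b i)"
    using N_tri[OF vec_scale[OF v(1)] vec_scale[OF v(2)]] .
  also have "\<dots> = (1 - t) * N a + t * N b" using t by (simp add: N_scale[OF v(1)] N_scale[OF v(2)])
  also have "\<dots> \<le> (1 - t) * 1 + t * 1"
    using ab t by (intro add_mono mult_left_mono) (auto simp: Bset_def)
  finally show "(\<lambda>i. (1 - t) * a i + t * b i) \<in> Bset"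
    using v by (auto simp: Bset_def intro: vec_comb)
qed

lemma near_norming:
  assumes x: "x \<in> Defs.vec k" and s: "s > 1" and p: "N x > 0"
  shows "\<exists>\<psi>\<in>dual_ball k N. dot k \<psi> x = N x / s"
proof -
  define w where "w = (\<lambda>i. (s / N x) * x i)"
  have wv: "w \<in> Defs.vec k" unfolding w_def by (rule vec_scale[OF x])
  have "N w = \<bar>s / N x\<bar> * N x" unfolding w_def by (rule N_scale[OF x])
  then have Nw: "N w = s" using p s by simp
  have "w \<notin> Bset" using Nw s by (simp add: Bset_def)
  moreover have "Bset \<subseteq> Defs.vec k" "Bset \<noteq> {}" by (auto simp: Bset_def intro!: exI[of _ "\<lambda>i. 0"])
  ultimately obtain z where z: "z \<in> Defs.vec k" "\<And>b. b \<in> Bset \<Longrightarrow> dot k z b < dot k z w"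
    using separation[OF _ B_closed B_cvx _ wv] by blast
  define \<alpha> where "\<alpha> = dot k z w"
  have ap: "\<alpha> > 0" using z(2)[of "\<lambda>i. 0"] by (simp add: Bset_def \<alpha>_def)
  define \<psi> where "\<psi> = (\<lambda>i. (1 / \<alpha>) * z i)"
  have "\<psi> \<in> dual_ball k N"
    unfolding Dchar
  proof (intro conjI ballI)
    show "\<psi> \<in> Defs.vec k" unfolding \<psi>_def by (rule vec_scale[OF z(1)])
    fix v assume v: "v \<in> Defs.vec k"
    show "\<bar>dot k \<psi> v\<bar> \<le> N v"
    proof (cases "N v = 0")
      case True then show ?thesis using N_def0[OF v] by simp
    next
      case False
      then have pv: "N v > 0" using N_nonneg[OF v] by simp
      define b where "b = (\<lambda>i. (1 / N v) * v i)"
      have bv: "b \<in> Defs.vec k" unfolding b_def by (rule vec_scale[OF v])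
      have "N b = \<bar>1 / N v\<bar> * N v" unfolding b_def by (rule N_scale[OF v])
      then have Nb: "N b = 1" using pv by simp
      have "b \<in> Bset" using bv Nb by (simp add: Bset_def)
      moreover have "neg b \<in> Bset" using neg_vec[OF bv] Nb N_neg[OF bv] by (simp add: Bset_def neg_def)
      ultimately have "dot k z b < \<alpha>" "dot k z (neg b) < \<alpha>" using z(2) by (auto simp: \<alpha>_def)
      then have "\<bar>dot k z b\<bar> < \<alpha>" by (simp add: neg_def dot_neg)
      moreover have "dot k z b = (1 / N v) * dot k z v" unfolding b_def by (rule dot_scale)
      ultimately have "\<bar>dot k z v\<bar> < \<alpha> * N v" using pv by (simp add: abs_mult field_simps)
      moreover have h1: "dot k \<psi> v = (1 / \<alpha>) * dot k z v" unfolding \<psi>_def by (rule dot_lscale)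
      ultimately have lt: "\<bar>dot k z v\<bar> < \<alpha> * N v" by simp
      have "\<bar>dot k \<psi> v\<bar> = \<bar>dot k z v\<bar> / \<alpha>" using h1 ap by (simp add: abs_mult)
      also have "\<dots> \<le> N v" using lt ap by (simp add: pos_divide_le_eq mult.commute)
      finally show ?thesis .
    qed
  qed
  moreover have "dot k \<psi> x = N x / s"
  proof -
    have "\<alpha> = (s / N x) * dot k z x" unfolding \<alpha>_def w_def by (rule dot_scale)
    moreover have "dot k \<psi> x = (1 / \<alpha>) * dot k z x" unfolding \<psi>_def by (rule dot_lscale)
    ultimately have e1: "\<alpha> * N x = s * dot k z x" and e2: "dot k z x = \<alpha> * dot k \<psi> x"
      using p ap by (auto simp: field_simps)
    have "\<alpha> * N x = \<alpha> * (s * dot k \<psi> x)" using e1 e2 by (simp add: algebra_simps)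
    then have "N x = s * dot k \<psi> x" using ap by simp
    then show ?thesis using s by (simp add: field_simps)
  qed
  ultimately show ?thesis by blast
qed

lemma F1: assumes x: "x \<in> Defs.vec k"
  shows "\<exists>\<phi>. extreme_pt \<phi> (dual_ball k N) \<and> dot k \<phi> x = N x"
proof -
  have ne: "dual_ball k N \<noteq> {}" using D_zero by auto
  obtain \<phi> where phi: "\<phi> \<in> dual_ball k N" "extreme_pt \<phi> (dual_ball k N)"
    "\<And>\<psi>. \<psi> \<in> dual_ball k N \<Longrightarrow> dot k \<psi> x \<le> dot k \<phi> x"
    using extreme_max[OF _ D_compact D_cvx ne, where x=x] D_vec by blast
  have le: "dot k \<phi> x \<le> N x" using D_le[OF phi(1) x] by simp
  have ge: "N x \<le> dot k \<phi> x"
  proof (cases "N x = 0")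
    case True then show ?thesis using phi(3)[OF D_zero] by simp
  next
    case False
    then have p: "N x > 0" using N_nonneg[OF x] by simp
    show ?thesis
    proof (rule ccontr)
      assume "\<not> N x \<le> dot k \<phi> x"
      then have lt: "dot k \<phi> x < N x" by simp
      define v where "v = dot k \<phi> x"
      define s where "s = (if v \<le> 0 then 2 else 2 * N x / (N x + v))"
      have s1: "s > 1" and sv: "N x / s > v"
        using lt p by (auto simp: s_def v_def field_simps)
      obtain \<psi> where "\<psi> \<in> dual_ball k N" "dot k \<psi> x = N x / s"
        using near_norming[OF x s1 p] by blast
      then show False using phi(3) sv by (fastforce simp: v_def)
    qed
  qed
  show ?thesis using phi(2) le ge by auto
qed

end


definition comb :: "nat \<Rightarrow> (nat \<Rightarrow> nat \<Rightarrow> real) \<Rightarrow> (nat \<Rightarrow> real) \<Rightarrow> nat \<Rightarrow> real" where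
  "comb p \<psi> l = (\<lambda>i. \<Sum>j<p. l j * \<psi> j i)"

definition hullset :: "nat \<Rightarrow> (nat \<Rightarrow> nat \<Rightarrow> real) \<Rightarrow> (nat \<Rightarrow> real) set" where
  "hullset p \<psi> = {comb p \<psi> l | l. (\<Sum>j<p. \<bar>l j\<bar>) \<le> 1}"

lemma comb_cong: "(\<And>j. j < p \<Longrightarrow> l j = l' j) \<Longrightarrow> comb p \<psi> l = comb p \<psi> l'"
  unfolding comb_def by (intro ext sum.cong) auto

lemma hull_vec: "(\<And>j. j < p \<Longrightarrow> \<psi> j \<in> Defs.vec k) \<Longrightarrow> hullset p \<psi> \<subseteq> Defs.vec k"
  by (auto simp: hullset_def comb_def Defs.vec_def)

lemma hull_zero: "(\<lambda>i. 0) \<in> hullset p \<psi>"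
proof -
  have "comb p \<psi> (\<lambda>j. 0) = (\<lambda>i. 0)" by (simp add: comb_def)
  then show ?thesis unfolding hullset_def by (auto intro!: exI[of _ "\<lambda>j. 0"])
qed

lemma hull_mem: "(\<Sum>j<p. \<bar>l j\<bar>) \<le> 1 \<Longrightarrow> comb p \<psi> l \<in> hullset p \<psi>"
  unfolding hullset_def by blast

lemma hull_cvx: "cvx (hullset p \<psi>)"
  unfolding cvx_def
proof (intro ballI allI impI)
  fix a b and t :: real assume ab: "a \<in> hullset p \<psi>" "b \<in> hullset p \<psi>" and t: "0 \<le> t \<and> t \<le> 1"
  obtain la where la: "a = comb p \<psi> la" "(\<Sum>j<p. \<bar>la j\<bar>) \<le> 1" using ab(1) by (auto simp: hullset_def)
  obtain lb where lb: "b = comb p \<psi> lb" "(\<Sum>j<p. \<bar>lb j\<bar>) \<le> 1" using ab(2) by (auto simp: hullset_def)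
  define l where "l j = (1 - t) * la j + t * lb j" for j
  have "(\<lambda>i. (1 - t) * a i + t * b i) = comb p \<psi> l"
    unfolding la lb comb_def l_def
  proof (rule ext)
    fix i
    have "(1 - t) * (\<Sum>j<p. la j * \<psi> j i) + t * (\<Sum>j<p. lb j * \<psi> j i)
        = (\<Sum>j<p. (1 - t) * (la j * \<psi> j i) + t * (lb j * \<psi> j i))"
      by (simp add: sum.distrib sum_distrib_left)
    also have "\<dots> = (\<Sum>j<p. ((1 - t) * la j + t * lb j) * \<psi> j i)"
      by (rule sum.cong) (simp_all add: algebra_simps)
    finally show "(1 - t) * (\<Sum>j<p. la j * \<psi> j i) + t * (\<Sum>j<p. lb j * \<psi> j i)
        = (\<Sum>j<p. ((1 - t) * la j + t * lb j) * \<psi> j i)" .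
  qed
  moreover have "(\<Sum>j<p. \<bar>l j\<bar>) \<le> 1"
  proof -
    have "(\<Sum>j<p. \<bar>l j\<bar>) \<le> (\<Sum>j<p. (1 - t) * \<bar>la j\<bar> + t * \<bar>lb j\<bar>)"
    proof (rule sum_mono)
      fix j
      have "\<bar>l j\<bar> \<le> \<bar>(1 - t) * la j\<bar> + \<bar>t * lb j\<bar>" unfolding l_def by (rule abs_triangle_ineq)
      also have "\<dots> = (1 - t) * \<bar>la j\<bar> + t * \<bar>lb j\<bar>" using t by (simp add: abs_mult)
      finally show "\<bar>l j\<bar> \<le> (1 - t) * \<bar>la j\<bar> + t * \<bar>lb j\<bar>" .
    qed
    also have "\<dots> = (1 - t) * (\<Sum>j<p. \<bar>la j\<bar>) + t * (\<Sum>j<p. \<bar>lb j\<bar>)"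
      by (simp add: sum.distrib sum_distrib_left)
    also have "\<dots> \<le> (1 - t) * 1 + t * 1"
      using t la lb by (intro add_mono mult_left_mono) auto
    finally show ?thesis by simp
  qed
  ultimately show "(\<lambda>i. (1 - t) * a i + t * b i) \<in> hullset p \<psi>" by (simp add: hull_mem)
qed

lemma hull_closed: "closed (hullset p \<psi>)"
proof -
  define K where "K j = (if j < p then {-1..1} else {0::real})" for j
  define L where "L = {l::nat\<Rightarrow>real. \<forall>j. l j \<in> K j} \<inter> {l. (\<Sum>j<p. \<bar>l j\<bar>) \<le> 1}"
  have cb: "compact {l::nat\<Rightarrow>real. \<forall>j. l j \<in> K j}" by (rule compact_box) (simp add: K_def)
  have "closed {l::nat\<Rightarrow>real. (\<Sum>j<p. \<bar>l j\<bar>) \<le> 1}"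
    by (intro closed_Collect_le continuous_intros cont_coord)
  then have cL: "compact L" unfolding L_def using cb by (rule compact_Int_closed[rotated])
  have cc: "continuous_on L (comb p \<psi>)"
    unfolding comb_def by (intro continuous_on_coordinatewise_then_product continuous_intros cont_coord)
  have "hullset p \<psi> = comb p \<psi> ` L"
  proof
    show "comb p \<psi> ` L \<subseteq> hullset p \<psi>" by (auto simp: L_def hullset_def)
    show "hullset p \<psi> \<subseteq> comb p \<psi> ` L"
    proof
      fix a assume "a \<in> hullset p \<psi>"
      then obtain l where l: "a = comb p \<psi> l" "(\<Sum>j<p. \<bar>l j\<bar>) \<le> 1" by (auto simp: hullset_def)
      define l' where "l' j = (if j < p then l j else 0)" for j
      have "comb p \<psi> l' = a" unfolding l(1) by (rule comb_cong) (simp add: l'_def)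
      moreover have "l' \<in> L"
      proof -
        have s: "(\<Sum>j<p. \<bar>l' j\<bar>) = (\<Sum>j<p. \<bar>l j\<bar>)" by (rule sum.cong) (auto simp: l'_def)
        have "\<bar>l j\<bar> \<le> 1" if "j < p" for j
        proof -
          have "\<bar>l j\<bar> \<le> (\<Sum>j<p. \<bar>l j\<bar>)"
            by (rule member_le_sum[where f="\<lambda>j. \<bar>l j\<bar>"]) (use that in auto)
          then show ?thesis using l(2) by linarith
        qed
        then have "\<forall>j. l' j \<in> K j" by (auto simp: l'_def K_def abs_le_iff)
        then show ?thesis using s l(2) by (simp add: L_def)
      qed
      ultimately show "a \<in> comb p \<psi> ` L" by blast
    qed
  qed
  then show ?thesis using compact_continuous_image[OF cc cL] compact_imp_closed by simp
qed

lemma dot_comb: "dot k (comb p \<psi> l) x = (\<Sum>j<p. l j * dot k (\<psi> j) x)"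
  unfolding dot_def comb_def
  by (simp add: sum_distrib_right sum_distrib_left mult.assoc sum.swap[where A="{..<k}"])

context nrm
begin

lemma hull_sub_D:
  assumes "\<And>j. j < p \<Longrightarrow> \<psi> j \<in> dual_ball k N"
  shows "hullset p \<psi> \<subseteq> dual_ball k N"
proof
  fix a assume "a \<in> hullset p \<psi>"
  then obtain l where l: "a = comb p \<psi> l" "(\<Sum>j<p. \<bar>l j\<bar>) \<le> 1" by (auto simp: hullset_def)
  show "a \<in> dual_ball k N" unfolding Dchar
  proof (intro conjI ballI)
    show "a \<in> Defs.vec k" using hull_vec[of p \<psi> k] assms D_vec \<open>a \<in> hullset p \<psi>\<close> by blast
    fix x assume x: "x \<in> Defs.vec k"
    have "\<bar>dot k a x\<bar> = \<bar>\<Sum>j<p. l j * dot k (\<psi> j) x\<bar>" by (simp add: l dot_comb)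
    also have "\<dots> \<le> (\<Sum>j<p. \<bar>l j\<bar> * N x)"
      by (rule order_trans[OF sum_abs], rule sum_mono)
         (use assms D_le[OF _ x] in \<open>auto simp: abs_mult intro!: mult_left_mono\<close>)
    also have "\<dots> = (\<Sum>j<p. \<bar>l j\<bar>) * N x" by (simp add: sum_distrib_right)
    also have "\<dots> \<le> 1 * N x" using l(2) N_nonneg[OF x] by (intro mult_right_mono) auto
    finally show "\<bar>dot k a x\<bar> \<le> N x" by simp
  qed
qed

lemma L_hull:
  assumes v: "\<And>j. j < p \<Longrightarrow> \<psi> j \<in> Defs.vec k"
    and dom: "\<And>x. x \<in> Defs.vec k \<Longrightarrow> \<exists>j<p. N x \<le> \<bar>dot k (\<psi> j) x\<bar>"
  shows "dual_ball k N \<subseteq> hullset p \<psi>"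
proof
  fix \<theta> assume th: "\<theta> \<in> dual_ball k N"
  show "\<theta> \<in> hullset p \<psi>"
  proof (rule ccontr)
    assume nh: "\<theta> \<notin> hullset p \<psi>"
    have ne: "hullset p \<psi> \<noteq> {}" using hull_zero by blast
    obtain z where z: "z \<in> Defs.vec k" "\<And>c. c \<in> hullset p \<psi> \<Longrightarrow> dot k z c < dot k z \<theta>"
      using separation[OF hull_vec[OF v] hull_closed hull_cvx ne D_vec[OF th] nh] by blast
    obtain j where j: "j < p" "N z \<le> \<bar>dot k (\<psi> j) z\<bar>" using dom[OF z(1)] by blast
    define \<sigma> where "\<sigma> = (if dot k (\<psi> j) z \<ge> 0 then 1 else -1::real)"
    define l where "l i = (if i = j then \<sigma> else 0)" for i
    have "(\<Sum>i<p. \<bar>l i\<bar>) = (\<Sum>i<p. if i = j then 1 else 0)"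
      by (rule sum.cong) (auto simp: l_def \<sigma>_def)
    also have "\<dots> = 1" using j(1) by (simp add: sum.delta)
    finally have "(\<Sum>i<p. \<bar>l i\<bar>) = 1" .
    then have h: "comb p \<psi> l \<in> hullset p \<psi>" by (simp add: hull_mem)
    have "dot k z (comb p \<psi> l) = dot k (comb p \<psi> l) z" by (rule dot_comm)
    also have "\<dots> = (\<Sum>i<p. if i = j then \<sigma> * dot k (\<psi> i) z else 0)"
      unfolding dot_comb by (rule sum.cong) (auto simp: l_def)
    also have "\<dots> = \<sigma> * dot k (\<psi> j) z" using j(1) by (simp add: sum.delta)
    also have "\<dots> = \<bar>dot k (\<psi> j) z\<bar>" by (simp add: \<sigma>_def)
    finally have "\<bar>dot k (\<psi> j) z\<bar> < dot k z \<theta>" using z(2)[OF h] by simp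
    also have "dot k z \<theta> = dot k \<theta> z" by (rule dot_comm)
    also have "\<dots> \<le> N z" using D_le[OF th z(1)] by simp
    finally show False using j(2) by simp
  qed
qed

end


context nrm
begin

lemma X_ext:
  assumes psi: "\<And>j. j < p \<Longrightarrow> \<psi> j \<in> dual_ball k N"
    and e: "extreme_pt \<phi> (dual_ball k N)" and h: "\<phi> \<in> hullset p \<psi>"
    and nz: "\<phi> \<noteq> (\<lambda>i. 0)"
  shows "\<exists>j<p. \<phi> = \<psi> j \<or> \<phi> = neg (\<psi> j)"
proof -
  obtain l where l: "\<phi> = comb p \<psi> l" "(\<Sum>j<p. \<bar>l j\<bar>) \<le> 1" using h by (auto simp: hullset_def)
  obtain j where j: "j < p" "l j \<noteq> 0"
  proof (rule ccontr)
    assume "\<not> thesis"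
    then have "\<forall>j<p. l j = 0" using that by blast
    then have "\<phi> = (\<lambda>i. 0)" unfolding l(1) comb_def by simp
    then show False using nz by simp
  qed
  define s where "s = \<bar>l j\<bar>"
  define \<sigma> where "\<sigma> = (if l j \<ge> 0 then 1 else -1::real)"
  define u where "u = (\<lambda>i. \<sigma> * \<psi> j i)"
  have uD: "u \<in> dual_ball k N"
  proof (cases "l j \<ge> 0")
    case True then show ?thesis using psi[OF j(1)] by (simp add: u_def \<sigma>_def)
  next
    case False
    then have "u = neg (\<psi> j)" by (simp add: u_def \<sigma>_def neg_def)
    then show ?thesis using D_neg[OF psi[OF j(1)]] by simp
  qed
  have u_or: "u = \<psi> j \<or> u = neg (\<psi> j)" by (auto simp: u_def \<sigma>_def neg_def)
  have ls: "l j = s * \<sigma>" by (simp add: s_def \<sigma>_def)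
  define A where "A = {..<p} - {j}"
  have fA: "finite A" by (simp add: A_def)
  define r where "r = (\<lambda>i. \<Sum>m\<in>A. l m * \<psi> m i)"
  have phi_eq: "\<phi> i = s * u i + r i" for i
  proof -
    have "\<phi> i = l j * \<psi> j i + (\<Sum>m\<in>A. l m * \<psi> m i)"
      unfolding l(1) comb_def A_def using j(1) by (simp add: sum.remove)
    then show ?thesis by (simp add: r_def u_def ls)
  qed
  have sumA: "s + (\<Sum>m\<in>A. \<bar>l m\<bar>) \<le> 1"
  proof -
    have "(\<Sum>m<p. \<bar>l m\<bar>) = \<bar>l j\<bar> + (\<Sum>m\<in>A. \<bar>l m\<bar>)"
      unfolding A_def using j(1) by (simp add: sum.remove)
    then show ?thesis using l(2) by (simp add: s_def)
  qed
  have s0: "s > 0" using j(2) by (simp add: s_def)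
  show ?thesis
  proof (cases "s = 1")
    case True
    then have "(\<Sum>m\<in>A. \<bar>l m\<bar>) \<le> 0" using sumA by simp
    then have "(\<Sum>m\<in>A. \<bar>l m\<bar>) = 0" by (meson antisym sum_nonneg abs_ge_zero)
    then have "\<forall>m\<in>A. l m = 0" using sum_nonneg_eq_0_iff[OF fA, of "\<lambda>m. \<bar>l m\<bar>"] by simp
    then have "r = (\<lambda>i. 0)" by (simp add: r_def)
    then have "\<phi> = u" using True phi_eq by (intro ext) simp
    then show ?thesis using u_or j(1) by blast
  next
    case False
    have "0 \<le> (\<Sum>m\<in>A. \<bar>l m\<bar>)" by (rule sum_nonneg) simp
    then have s1: "s < 1" using sumA False by linarith
    define t where "t = 1 - s"
    define w where "w = (\<lambda>i. (1 / t) * r i)"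
    define l' where "l' m = (if m = j then 0 else l m / t)" for m
    have t0: "0 < t" "t < 1" using s0 s1 by (auto simp: t_def)
    have wc: "w = comb p \<psi> l'"
    proof (rule ext)
      fix i
      have "comb p \<psi> l' i = (\<Sum>m\<in>A. l' m * \<psi> m i)"
        unfolding comb_def A_def using j(1) by (simp add: sum.remove l'_def)
      also have "\<dots> = (\<Sum>m\<in>A. (1 / t) * (l m * \<psi> m i))"
        by (rule sum.cong) (auto simp: A_def l'_def)
      also have "\<dots> = w i" by (simp add: w_def r_def sum_distrib_left)
      finally show "w i = comb p \<psi> l' i" by simp
    qed
    have "(\<Sum>m<p. \<bar>l' m\<bar>) = (\<Sum>m\<in>A. \<bar>l m\<bar> / t)"
    proof -
      have "(\<Sum>m<p. \<bar>l' m\<bar>) = \<bar>l' j\<bar> + (\<Sum>m\<in>A. \<bar>l' m\<bar>)"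
        unfolding A_def using j(1) by (simp add: sum.remove)
      also have "(\<Sum>m\<in>A. \<bar>l' m\<bar>) = (\<Sum>m\<in>A. \<bar>l m\<bar> / t)"
        by (rule sum.cong) (use t0 in \<open>auto simp: A_def l'_def abs_divide\<close>)
      finally show ?thesis by (simp add: l'_def)
    qed
    also have "\<dots> = (\<Sum>m\<in>A. \<bar>l m\<bar>) / t" by (simp add: sum_divide_distrib)
    also have "\<dots> \<le> 1" using sumA t0 by (simp add: t_def pos_divide_le_eq)
    finally have "w \<in> hullset p \<psi>" unfolding wc by (rule hull_mem)
    moreover have "hullset p \<psi> \<subseteq> dual_ball k N" by (rule hull_sub_D) (rule psi)
    ultimately have wD: "w \<in> dual_ball k N" by blast
    have "\<phi> = (\<lambda>i. (1 - t) * u i + t * w i)"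
      using phi_eq t0 by (intro ext) (simp add: t_def w_def)
    then have "u = w" using e uD wD t0 unfolding extreme_pt_def by blast
    have "\<phi> i = u i" for i
    proof -
      have "u i = (1 / t) * r i" using \<open>u = w\<close> by (simp add: w_def)
      then have "r i = t * u i" using t0 by (simp add: field_simps)
      then show ?thesis using phi_eq[of i] by (simp add: t_def algebra_simps)
    qed
    then have "\<phi> = u" by (rule ext)
    then show ?thesis using u_or j(1) by blast
  qed
qed

end


definition pos :: "(nat \<Rightarrow> real) \<Rightarrow> bool" where
  "pos \<phi> \<longleftrightarrow> \<phi> (LEAST i. \<phi> i \<noteq> 0) > 0"

lemma pos_neg:
  assumes "\<phi> \<noteq> (\<lambda>i. 0)"
  shows "pos (neg \<phi>) \<longleftrightarrow> \<not> pos \<phi>"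
proof -
  have ex: "\<exists>i. \<phi> i \<noteq> 0" using assms by auto
  define l where "l = (LEAST i. \<phi> i \<noteq> 0)"
  have nz: "\<phi> l \<noteq> 0" unfolding l_def by (rule LeastI_ex[OF ex])
  have "(LEAST i. neg \<phi> i \<noteq> 0) = l" by (simp add: neg_def l_def)
  then show ?thesis using nz by (auto simp: pos_def neg_def l_def)
qed

definition iota :: "nat \<Rightarrow> nat \<Rightarrow> (nat \<Rightarrow> nat \<Rightarrow> real) \<Rightarrow> nat \<Rightarrow> nat \<Rightarrow> real" where
  "iota d k rep = (\<lambda>i j. if i < d \<and> j < k then rep i j else 0)"

lemma mapply_iota: "mapply k (iota d k rep) x = (\<lambda>i. if i < d then dot k (rep i) x else 0)"
  unfolding mapply_def iota_def dot_def by (rule ext) auto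

lemma is_mat_iota: "is_mat d k (iota d k rep)"
  by (simp add: is_mat_def iota_def)

context nrm
begin

lemma zero_not_ext:
  assumes fin: "finite {\<phi>. extreme_pt \<phi> (dual_ball k N)}"
    and card: "card {\<phi>. extreme_pt \<phi> (dual_ball k N)} = 2 * d" and d: "0 < d"
  shows "\<not> extreme_pt (\<lambda>i. 0) (dual_ball k N)"
proof
  assume e: "extreme_pt (\<lambda>i. 0) (dual_ball k N)"
  have "a = (\<lambda>i. 0)" if a: "a \<in> dual_ball k N" for a
  proof -
    have "(\<lambda>i. 0::real) = (\<lambda>i. (1 - 1/2) * a i + (1/2) * neg a i)"
      by (simp add: neg_def)
    moreover have "(0::real) < 1/2" "(1/2::real) < 1" by simp_all
    ultimately have "a = neg a" using e a D_neg[OF a] unfolding extreme_pt_def by blast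
    then have "a i = - a i" for i by (metis neg_def)
    then have "a i = 0" for i by (metis add.inverse_unique add_0 equal_neg_zero)
    then show ?thesis by (rule ext)
  qed
  then have "{\<phi>. extreme_pt \<phi> (dual_ball k N)} \<subseteq> {\<lambda>i. 0}"
    by (auto simp: extreme_pt_def)
  then have "card {\<phi>. extreme_pt \<phi> (dual_ball k N)} \<le> card {\<lambda>i::nat. 0::real}"
    by (intro card_mono) simp_all
  then have "card {\<phi>. extreme_pt \<phi> (dual_ball k N)} \<le> 1" by simp
  then show False using card d by simp
qed

lemma reps:
  assumes fin: "finite {\<phi>. extreme_pt \<phi> (dual_ball k N)}"
    and card: "card {\<phi>. extreme_pt \<phi> (dual_ball k N)} = 2 * d" and d: "0 < d"
  shows "\<exists>rep. (\<forall>i<d. extreme_pt (rep i) (dual_ball k N)) \<and>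
    (\<forall>\<phi>. extreme_pt \<phi> (dual_ball k N) \<longrightarrow> (\<exists>i<d. \<phi> = rep i \<or> \<phi> = neg (rep i))) \<and>
    (\<forall>i<d. \<forall>j<d. (rep i = rep j \<or> rep i = neg (rep j)) \<longrightarrow> i = j)"
proof -
  define E where "E = {\<phi>. extreme_pt \<phi> (dual_ball k N)}"
  have nz: "\<phi> \<noteq> (\<lambda>i. 0)" if "\<phi> \<in> E" for \<phi>
    using zero_not_ext[OF fin card d] that by (auto simp: E_def)
  have Eneg: "neg \<phi> \<in> E" if "\<phi> \<in> E" for \<phi>
    using extreme_neg[OF D_neg] that by (simp add: E_def)
  define R where "R = {\<phi>\<in>E. pos \<phi>}"
  have ER: "E = R \<union> neg ` R"
  proof
    show "E \<subseteq> R \<union> neg ` R"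
    proof
      fix \<phi> assume p: "\<phi> \<in> E"
      show "\<phi> \<in> R \<union> neg ` R"
      proof (cases "pos \<phi>")
        case True then show ?thesis using p by (simp add: R_def)
      next
        case False
        then have "neg \<phi> \<in> R" using p Eneg pos_neg[OF nz[OF p]] by (simp add: R_def)
        then show ?thesis by (metis UnI2 image_eqI neg_neg)
      qed
    qed
    show "R \<union> neg ` R \<subseteq> E" using Eneg by (auto simp: R_def)
  qed
  have disj: "R \<inter> neg ` R = {}"
  proof (rule ccontr)
    assume "R \<inter> neg ` R \<noteq> {}"
    then obtain \<psi> where "\<psi> \<in> R" "neg \<psi> \<in> R" by auto
    then show False using pos_neg[OF nz] by (auto simp: R_def)
  qed
  have finR: "finite R" using fin by (simp add: R_def E_def)
  have injn: "inj_on neg R" by (metis inj_onI neg_neg)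
  have "card E = card R + card (neg ` R)"
    unfolding ER by (rule card_Un_disjoint) (use finR disj in auto)
  then have cR: "card R = d" using card card_image[OF injn] by (simp add: E_def)
  obtain h where h: "bij_betw h {0..<d} R" using ex_bij_betw_nat_finite[OF finR] cR by blast
  have hR: "h i \<in> R" if "i < d" for i using h that by (auto simp: bij_betw_def)
  show ?thesis
  proof (intro exI[of _ h] conjI allI impI)
    fix i assume "i < d" then show "extreme_pt (h i) (dual_ball k N)"
      using hR by (simp add: R_def E_def)
  next
    fix \<phi> assume "extreme_pt \<phi> (dual_ball k N)"
    then have p: "\<phi> \<in> E" by (simp add: E_def)
    then have "\<phi> \<in> R \<or> neg \<phi> \<in> R" using ER by auto
    then show "\<exists>i<d. \<phi> = h i \<or> \<phi> = neg (h i)"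
    proof
      assume "\<phi> \<in> R"
      then obtain i where "i < d" "\<phi> = h i" using h by (auto simp: bij_betw_def)
      then show ?thesis by blast
    next
      assume "neg \<phi> \<in> R"
      then obtain i where "i < d" "neg \<phi> = h i" using h by (auto simp: bij_betw_def)
      then show ?thesis by (metis neg_neg)
    qed
  next
    fix i j assume ij: "i < d" "j < d" "h i = h j \<or> h i = neg (h j)"
    show "i = j"
    proof (cases "h i = h j")
      case True then show ?thesis using h ij by (auto simp: bij_betw_def inj_on_def)
    next
      case False
      then have "h i = neg (h j)" using ij by simp
      moreover have "pos (h i)" "pos (h j)" "h j \<in> E" using hR ij by (auto simp: R_def)
      ultimately show ?thesis using pos_neg[OF nz] by metis
    qed
  qed
qed

lemma iota_emb:
  assumes r1: "\<forall>i<d. extreme_pt (rep i) (dual_ball k N)"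
    and r2: "\<forall>\<phi>. extreme_pt \<phi> (dual_ball k N) \<longrightarrow> (\<exists>i<d. \<phi> = rep i \<or> \<phi> = neg (rep i))"
  shows "iota d k rep \<in> Emb k N d (linf d)"
  unfolding Emb_def
proof (intro CollectI conjI ballI is_mat_iota)
  fix x assume x: "x \<in> Defs.vec k"
  have img: "(\<lambda>i. \<bar>mapply k (iota d k rep) x i\<bar>) ` {..<d} = (\<lambda>i. \<bar>dot k (rep i) x\<bar>) ` {..<d}"
    by (rule image_cong) (auto simp: mapply_iota)
  have repD: "rep i \<in> dual_ball k N" if "i < d" for i
    using r1 that by (simp add: extreme_pt_def)
  obtain \<phi> where phi: "extreme_pt \<phi> (dual_ball k N)" "dot k \<phi> x = N x" using F1[OF x] by blast
  obtain i where i: "i < d" "\<phi> = rep i \<or> \<phi> = neg (rep i)" using r2 phi(1) by blast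
  have "\<bar>dot k (rep i) x\<bar> = N x" using i phi(2) N_nonneg[OF x] by (auto simp: dot_negL)
  then have mem: "N x \<in> insert 0 ((\<lambda>i. \<bar>dot k (rep i) x\<bar>) ` {..<d})" using i(1) by force
  show "linf d (mapply k (iota d k rep) x) = N x"
    unfolding linf_def img
    by (rule Max_eqI) (use mem N_nonneg[OF x] D_le[OF repD x] in auto)
qed

end


lemma mapply_mcomp: "mapply a (mcomp b X Y) x = mapply b X (mapply a Y x)"
  unfolding mapply_def mcomp_def
  by (rule ext) (simp add: sum_distrib_left sum_distrib_right mult.assoc sum.swap[where A="{..<a}"])

lemma mcomp_assoc: "mcomp a (mcomp b X Y) Z = mcomp b X (mcomp a Y Z)"
  unfolding mcomp_def
  by (intro ext) (simp add: sum_distrib_left sum_distrib_right mult.assoc sum.swap[where A="{..<a}"])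

lemma is_mat_mcomp: "is_mat c b X \<Longrightarrow> is_mat b a Y \<Longrightarrow> is_mat c a (mcomp b X Y)"
  unfolding is_mat_def mcomp_def by auto

lemma mapply_vec: "is_mat l k A \<Longrightarrow> mapply k A x \<in> Defs.vec l"
  unfolding is_mat_def mapply_def Defs.vec_def by auto

lemma mapply_zero: "mapply k A (\<lambda>i. 0) = (\<lambda>i. 0)"
  by (simp add: mapply_def)

lemma emb_comp:
  assumes X: "X \<in> Emb b M c P" and Y: "Y \<in> Emb a N b M"
  shows "mcomp b X Y \<in> Emb a N c P"
  unfolding Emb_def
proof (intro CollectI conjI ballI)
  show "is_mat c a (mcomp b X Y)" using X Y by (auto simp: Emb_def intro: is_mat_mcomp)
  fix x assume x: "x \<in> Defs.vec a"
  have yv: "mapply a Y x \<in> Defs.vec b" using Y by (auto simp: Emb_def intro: mapply_vec)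
  have "P (mapply a (mcomp b X Y) x) = P (mapply b X (mapply a Y x))" by (simp add: mapply_mcomp)
  also have "\<dots> = M (mapply a Y x)" using X yv by (auto simp: Emb_def)
  also have "\<dots> = N x" using Y x by (auto simp: Emb_def)
  finally show "P (mapply a (mcomp b X Y) x) = N x" .
qed

lemma mcomp_diff: "(\<lambda>i j. mcomp b S Y i j - mcomp b T Y i j) = mcomp b (\<lambda>i j. S i j - T i j) Y"
  unfolding mcomp_def by (intro ext) (simp add: sum_subtractf left_diff_distrib)

section \<open>The sup norm\<close>

lemma linf_ge: "i < n \<Longrightarrow> \<bar>y i\<bar> \<le> linf n y"
  unfolding linf_def by (rule Max_ge) auto

lemma linf_nonneg: "0 \<le> linf n y"
  unfolding linf_def by (rule Max_ge) auto

lemma linf_le: "0 \<le> c \<Longrightarrow> (\<And>i. i < n \<Longrightarrow> \<bar>y i\<bar> \<le> c) \<Longrightarrow> linf n y \<le> c"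
  unfolding linf_def by (rule Max.boundedI) auto

lemma linf_mapply_bound:
  assumes "linf d y \<le> 1"
  shows "linf n (mapply d A y) \<le> (\<Sum>i<n. \<Sum>j<d. \<bar>A i j\<bar>)"
proof (rule linf_le)
  show "0 \<le> (\<Sum>i<n. \<Sum>j<d. \<bar>A i j\<bar>)" by (intro sum_nonneg) auto
  fix i assume i: "i < n"
  have "\<bar>mapply d A y i\<bar> \<le> (\<Sum>j<d. \<bar>A i j\<bar> * \<bar>y j\<bar>)"
    unfolding mapply_def by (rule order_trans[OF sum_abs]) (simp add: abs_mult)
  also have "\<dots> \<le> (\<Sum>j<d. \<bar>A i j\<bar>)"
  proof (rule sum_mono)
    fix j assume "j \<in> {..<d}"
    then have "\<bar>y j\<bar> \<le> 1" using linf_ge[of j d y] assms by simp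
    then show "\<bar>A i j\<bar> * \<bar>y j\<bar> \<le> \<bar>A i j\<bar>" by (simp add: mult_left_le)
  qed
  also have "\<dots> \<le> (\<Sum>i<n. \<Sum>j<d. \<bar>A i j\<bar>)"
    by (rule member_le_sum[where f="\<lambda>i. \<Sum>j<d. \<bar>A i j\<bar>"]) (use i in \<open>auto intro: sum_nonneg\<close>)
  finally show "\<bar>mapply d A y i\<bar> \<le> (\<Sum>i<n. \<Sum>j<d. \<bar>A i j\<bar>)" .
qed

lemma opdist_comp_le:
  assumes Y: "Y \<in> Emb a N d (linf d)"
  shows "opdist a N (linf n) (mcomp d S Y) (mcomp d T Y) \<le> opdist d (linf d) (linf n) S T"
  unfolding opdist_def
proof (rule cSup_subset_mono)
  have "N (\<lambda>i. 0) = linf d (mapply a Y (\<lambda>i. 0))" using Y by (simp add: Emb_def)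
  moreover have "linf d (\<lambda>i. 0) = 0"
    using linf_le[of 0 d "\<lambda>i. 0"] linf_nonneg[of d "\<lambda>i. 0"] by simp
  ultimately have N0: "N (\<lambda>i. 0) = 0" by (simp add: mapply_zero)
  show "{linf n (mapply a (\<lambda>i j. mcomp d S Y i j - mcomp d T Y i j) x) |x. x \<in> Defs.vec a \<and> N x \<le> 1} \<noteq> {}"
    using N0 by (auto intro!: exI[of _ "\<lambda>i. 0"])
  show "bdd_above {linf n (mapply d (\<lambda>i j. S i j - T i j) x) |x. x \<in> Defs.vec d \<and> linf d x \<le> 1}"
    by (rule bdd_aboveI[of _ "\<Sum>i<n. \<Sum>j<d. \<bar>S i j - T i j\<bar>"]) (auto intro: linf_mapply_bound)
  show "{linf n (mapply a (\<lambda>i j. mcomp d S Y i j - mcomp d T Y i j) x) |x. x \<in> Defs.vec a \<and> N x \<le> 1}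
      \<subseteq> {linf n (mapply d (\<lambda>i j. S i j - T i j) x) |x. x \<in> Defs.vec d \<and> linf d x \<le> 1}"
  proof clarify
    fix x assume x: "x \<in> Defs.vec a" "N x \<le> 1"
    have yv: "mapply a Y x \<in> Defs.vec d" using Y by (auto simp: Emb_def intro: mapply_vec)
    have "linf d (mapply a Y x) = N x" using Y x by (auto simp: Emb_def)
    then show "\<exists>y. linf n (mapply a (\<lambda>i j. mcomp d S Y i j - mcomp d T Y i j) x) = linf n (mapply d (\<lambda>i j. S i j - T i j) y) \<and>
              y \<in> Defs.vec d \<and> linf d y \<le> 1"
      using yv x by (intro exI[of _ "mapply a Y x"]) (simp add: mcomp_diff mapply_mcomp)
  qed
qed

lemma linf_emb_I:
  assumes m: "is_mat m d V"
    and rows: "\<And>j. j < m \<Longrightarrow> (\<Sum>i<d. \<bar>V j i\<bar>) \<le> 1"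
    and cov: "\<And>i. i < d \<Longrightarrow> \<exists>j<m. \<exists>\<sigma>. \<bar>\<sigma>\<bar> = 1 \<and> (\<forall>i'<d. V j i' = (if i' = i then \<sigma> else 0))"
  shows "V \<in> Emb d (linf d) m (linf m)"
  unfolding Emb_def
proof (intro CollectI conjI ballI m)
  fix y assume y: "y \<in> Defs.vec d"
  have le: "linf m (mapply d V y) \<le> linf d y"
  proof (rule linf_le[OF linf_nonneg])
    fix j assume j: "j < m"
    have "\<bar>mapply d V y j\<bar> \<le> (\<Sum>i<d. \<bar>V j i\<bar> * \<bar>y i\<bar>)"
      unfolding mapply_def by (rule order_trans[OF sum_abs]) (simp add: abs_mult)
    also have "\<dots> \<le> (\<Sum>i<d. \<bar>V j i\<bar> * linf d y)"
      by (rule sum_mono) (auto intro: mult_left_mono linf_ge)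
    also have "\<dots> = (\<Sum>i<d. \<bar>V j i\<bar>) * linf d y" by (simp add: sum_distrib_right)
    also have "\<dots> \<le> 1 * linf d y" using rows[OF j] linf_nonneg by (intro mult_right_mono) auto
    finally show "\<bar>mapply d V y j\<bar> \<le> linf d y" by simp
  qed
  have ge: "linf d y \<le> linf m (mapply d V y)"
  proof (rule linf_le[OF linf_nonneg])
    fix i assume i: "i < d"
    obtain j \<sigma> where j: "j < m" "\<bar>\<sigma>\<bar> = 1" "\<forall>i'<d. V j i' = (if i' = i then \<sigma> else 0)"
      using cov[OF i] by blast
    have "mapply d V y j = (\<Sum>i'<d. if i' = i then \<sigma> * y i' else 0)"
      unfolding mapply_def by (rule sum.cong) (use j(3) in auto)
    also have "\<dots> = \<sigma> * y i" using i by (simp add: sum.delta)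
    finally have "\<bar>y i\<bar> = \<bar>mapply d V y j\<bar>" using j(2) by (simp add: abs_mult)
    also have "\<dots> \<le> linf m (mapply d V y)" using linf_ge[OF j(1)] .
    finally show "\<bar>y i\<bar> \<le> linf m (mapply d V y)" .
  qed
  show "linf m (mapply d V y) = linf d y" using le ge by simp
qed

lemma linf_unit: "i < m \<Longrightarrow> linf m (unit i) = 1"
proof -
  assume i: "i < m"
  have "linf m (unit i) \<le> 1" by (rule linf_le) (auto simp: unit_def)
  moreover have "1 \<le> linf m (unit i)" using linf_ge[OF i, of "unit i"] by (simp add: unit_def)
  ultimately show ?thesis by simp
qed

lemma linf_attained:
  assumes "linf n y > 0" shows "\<exists>j<n. \<bar>y j\<bar> = linf n y"
proof -
  have "linf n y \<in> insert 0 ((\<lambda>i. \<bar>y i\<bar>) ` {..<n})" unfolding linf_def by (rule Max_in) auto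
  then show ?thesis using assms by auto
qed

lemma linf_emb_dim:
  assumes V: "V \<in> Emb m (linf m) n (linf n)"
  shows "m \<le> n"
proof -
  have iso: "linf n (mapply m V x) = linf m x" if "x \<in> Defs.vec m" for x
    using V that by (auto simp: Emb_def)
  have rowb: "(\<Sum>l<m. \<bar>V j l\<bar>) \<le> 1" if j: "j < n" for j
  proof -
    define y where "y l = (if l < m then sgn (V j l) else 0)" for l
    have yv: "y \<in> Defs.vec m" by (simp add: y_def Defs.vec_def)
    have "linf m y \<le> 1" by (rule linf_le) (auto simp: y_def abs_sgn_eq)
    have "mapply m V y j = (\<Sum>l<m. \<bar>V j l\<bar>)"
      unfolding mapply_def by (rule sum.cong) (auto simp: y_def sgn_if abs_if)
    then have "(\<Sum>l<m. \<bar>V j l\<bar>) \<le> linf n (mapply m V y)"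
      using linf_ge[OF j, of "mapply m V y"] by simp
    then show ?thesis using iso[OF yv] \<open>linf m y \<le> 1\<close> by simp
  qed
  have "\<exists>j<n. \<bar>V j i\<bar> = 1" if i: "i < m" for i
  proof -
    have "linf n (mapply m V (unit i)) = 1" using iso[OF vec_unit[OF i]] linf_unit[OF i] by simp
    then obtain j where j: "j < n" "\<bar>mapply m V (unit i) j\<bar> = 1"
      using linf_attained[of n "mapply m V (unit i)"] by auto
    have "mapply m V (unit i) j = V j i"
    proof -
      have "mapply m V (unit i) j = (\<Sum>l<m. if l = i then V j l else 0)"
        unfolding mapply_def unit_def by (rule sum.cong) auto
      then show ?thesis using i by (simp add: sum.delta)
    qed
    then show ?thesis using j by auto
  qed
  then obtain g where g: "\<And>i. i < m \<Longrightarrow> g i < n \<and> \<bar>V (g i) i\<bar> = 1" by metis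
  have "inj_on g {..<m}"
  proof (rule inj_onI)
    fix i i' assume ii: "i \<in> {..<m}" "i' \<in> {..<m}" "g i = g i'"
    show "i = i'"
    proof (rule ccontr)
      assume ne: "i \<noteq> i'"
      let ?j = "g i"
      have "(\<Sum>l<m. \<bar>V ?j l\<bar>) \<ge> (\<Sum>l\<in>{i, i'}. \<bar>V ?j l\<bar>)"
        by (rule sum_mono2) (use ii in auto)
      also have "(\<Sum>l\<in>{i, i'}. \<bar>V ?j l\<bar>) = 2"
      proof -
        have a1: "\<bar>V ?j i\<bar> = 1" using g[of i] ii(1) by simp
        have a2: "\<bar>V ?j i'\<bar> = 1" using g[of i'] ii by simp
        show ?thesis using ne a1 a2 by simp
      qed
      finally show False using rowb[of ?j] g ii by auto
    qed
  qed
  moreover have "g ` {..<m} \<subseteq> {..<n}" using g by auto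
  ultimately show ?thesis using card_inj_on_le[of g "{..<m}" "{..<n}"] by simp
qed


lemma lifting:
  assumes F: "nrm kF NF" and G: "nrm kG NG"
    and f1: "\<forall>i<d. extreme_pt (repF i) (dual_ball kF NF)"
    and f2: "\<forall>\<phi>. extreme_pt \<phi> (dual_ball kF NF) \<longrightarrow> (\<exists>i<d. \<phi> = repF i \<or> \<phi> = neg (repF i))"
    and f3: "\<forall>i<d. \<forall>j<d. (repF i = repF j \<or> repF i = neg (repF j)) \<longrightarrow> i = j"
    and f0: "\<forall>i<d. repF i \<noteq> (\<lambda>l. 0)"
    and g1: "\<forall>j<m. extreme_pt (repG j) (dual_ball kG NG)"
    and g2: "\<forall>\<phi>. extreme_pt \<phi> (dual_ball kG NG) \<longrightarrow> (\<exists>j<m. \<phi> = repG j \<or> \<phi> = neg (repG j))"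
    and U: "U \<in> Emb kF NF kG NG"
  shows "\<exists>V\<in>Emb d (linf d) m (linf m). mcomp d V (iota d kF repF) = mcomp kG (iota m kG repG) U"
proof -
  interpret F: nrm kF NF by (rule F)
  interpret G: nrm kG NG by (rule G)
  have Umat: "is_mat kG kF U" and Uiso: "\<And>x. x \<in> Defs.vec kF \<Longrightarrow> NG (mapply kF U x) = NF x"
    using U by (auto simp: Emb_def)
  have Uv: "mapply kF U x \<in> Defs.vec kG" for x using Umat by (rule mapply_vec)
  define \<theta> where "\<theta> j = (\<lambda>l. \<Sum>q<kG. repG j q * U q l)" for j
  have dot\<theta>: "dot kF (\<theta> j) x = dot kG (repG j) (mapply kF U x)" for j x
    unfolding dot_def mapply_def \<theta>_def
    by (simp add: sum_distrib_left sum_distrib_right mult.assoc sum.swap[where A="{..<kF}"])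
  have \<theta>v: "\<theta> j \<in> Defs.vec kF" for j
    using Umat by (simp add: \<theta>_def Defs.vec_def is_mat_def)
  have repGD: "repG j \<in> dual_ball kG NG" if "j < m" for j
    using g1 that by (simp add: extreme_pt_def)
  have repFD: "repF i \<in> dual_ball kF NF" if "i < d" for i
    using f1 that by (simp add: extreme_pt_def)
  have \<theta>D: "\<theta> j \<in> dual_ball kF NF" if j: "j < m" for j
    unfolding F.Dchar
  proof (intro conjI ballI \<theta>v)
    fix x assume x: "x \<in> Defs.vec kF"
    show "\<bar>dot kF (\<theta> j) x\<bar> \<le> NF x"
      using G.D_le[OF repGD[OF j] Uv[of x]] Uiso[OF x] by (simp add: dot\<theta>)
  qed
  have dom\<theta>: "\<exists>j<m. NF x \<le> \<bar>dot kF (\<theta> j) x\<bar>" if x: "x \<in> Defs.vec kF" for x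
  proof -
    obtain \<phi> where phi: "extreme_pt \<phi> (dual_ball kG NG)" "dot kG \<phi> (mapply kF U x) = NG (mapply kF U x)"
      using G.F1[OF Uv[of x]] by blast
    obtain j where j: "j < m" "\<phi> = repG j \<or> \<phi> = neg (repG j)" using g2 phi(1) by blast
    have "\<bar>dot kG (repG j) (mapply kF U x)\<bar> = NF x"
      using j(2) phi(2) Uiso[OF x] G.N_nonneg[OF Uv[of x]] by (auto simp: dot_negL)
    then show ?thesis using j(1) by (auto simp: dot\<theta>)
  qed
  have hull\<theta>: "dual_ball kF NF \<subseteq> hullset m \<theta>"
    by (rule F.L_hull[OF \<theta>v dom\<theta>])
  have "\<exists>j<m. repF i = \<theta> j \<or> repF i = neg (\<theta> j)" if i: "i < d" for i
  proof -
    have e: "extreme_pt (repF i) (dual_ball kF NF)" using f1 i by blast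
    have "repF i \<in> hullset m \<theta>" using hull\<theta> repFD[OF i] by blast
    moreover have "repF i \<noteq> (\<lambda>l. 0)" using f0 i by blast
    ultimately show ?thesis using F.X_ext[where p=m and \<psi>=\<theta> and \<phi>="repF i"] \<theta>D e by blast
  qed
  then obtain g where g: "\<And>i. i < d \<Longrightarrow> g i < m \<and> (repF i = \<theta> (g i) \<or> repF i = neg (\<theta> (g i)))"
    by metis
  have domF: "\<exists>i<d. NF x \<le> \<bar>dot kF (repF i) x\<bar>" if x: "x \<in> Defs.vec kF" for x
  proof -
    obtain \<phi> where phi: "extreme_pt \<phi> (dual_ball kF NF)" "dot kF \<phi> x = NF x"
      using F.F1[OF x] by blast
    obtain i where i: "i < d" "\<phi> = repF i \<or> \<phi> = neg (repF i)" using f2 phi(1) by blast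
    have "\<bar>dot kF (repF i) x\<bar> = NF x"
      using i(2) phi(2) F.N_nonneg[OF x] by (auto simp: dot_negL)
    then show ?thesis using i(1) by auto
  qed
  have hullF: "dual_ball kF NF \<subseteq> hullset d repF"
    by (rule F.L_hull[OF _ domF]) (use repFD F.D_vec in blast)
  have "\<exists>l. (\<Sum>i<d. \<bar>l i\<bar>) \<le> 1 \<and> \<theta> j = comb d repF l" if j: "j < m" for j
    using hullF \<theta>D[OF j] by (auto simp: hullset_def)
  then obtain \<Lambda> where \<Lambda>: "\<And>j. j < m \<Longrightarrow> (\<Sum>i<d. \<bar>\<Lambda> j i\<bar>) \<le> 1 \<and> \<theta> j = comb d repF (\<Lambda> j)"
    by metis
  have ginj: "i = i'" if "i < d" "i' < d" "g i = g i'" for i i'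
  proof -
    have "repF i = repF i' \<or> repF i = neg (repF i')"
      using g[OF that(1)] g[OF that(2)] that(3) by (auto simp: neg_def)
    then show ?thesis using f3 that by blast
  qed
  define \<sigma> where "\<sigma> i = (if repF i = \<theta> (g i) then 1 else -1::real)" for i
  have \<sigma>abs: "\<bar>\<sigma> i\<bar> = 1" for i by (simp add: \<sigma>_def)
  have \<sigma>rep: "\<sigma> i * repF i l = \<theta> (g i) l" if i: "i < d" for i l
  proof (cases "repF i = \<theta> (g i)")
    case True then show ?thesis by (simp add: \<sigma>_def)
  next
    case False
    then have "repF i = neg (\<theta> (g i))" using g[OF i] by blast
    then show ?thesis using False by (simp add: \<sigma>_def neg_def)
  qed
  define V where "V j i = (if j < m \<and> i < d then
      (if (\<exists>i0<d. g i0 = j) then (if g i = j then \<sigma> i else 0) else \<Lambda> j i) else 0)" for j i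
  have Vg: "V (g i0) i = (if i = i0 then \<sigma> i0 else 0)" if i0: "i0 < d" and i: "i < d" for i0 i
    using g[OF i0] i i0 ginj[OF i i0] by (auto simp: V_def)
  have Vemb: "V \<in> Emb d (linf d) m (linf m)"
  proof (rule linf_emb_I)
    show "is_mat m d V" by (simp add: is_mat_def V_def)
  next
    fix j assume j: "j < m"
    show "(\<Sum>i<d. \<bar>V j i\<bar>) \<le> 1"
    proof (cases "\<exists>i0<d. g i0 = j")
      case True
      then obtain i0 where i0: "i0 < d" "g i0 = j" by blast
      have "(\<Sum>i<d. \<bar>V j i\<bar>) = (\<Sum>i<d. if i = i0 then 1 else 0)"
        by (rule sum.cong) (use Vg[OF i0(1)] i0(2) \<sigma>abs in auto)
      also have "\<dots> = 1" using i0(1) by (simp add: sum.delta)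
      finally show ?thesis by simp
    next
      case False
      have "(\<Sum>i<d. \<bar>V j i\<bar>) = (\<Sum>i<d. \<bar>\<Lambda> j i\<bar>)"
        by (rule sum.cong) (use False j in \<open>auto simp: V_def\<close>)
      then show ?thesis using \<Lambda>[OF j] by simp
    qed
  next
    fix i assume i: "i < d"
    show "\<exists>j<m. \<exists>\<sigma>. \<bar>\<sigma>\<bar> = 1 \<and> (\<forall>i'<d. V j i' = (if i' = i then \<sigma> else 0))"
      using g[OF i] Vg[OF i] \<sigma>abs by blast
  qed
  have eq: "mcomp d V (iota d kF repF) a b = mcomp kG (iota m kG repG) U a b" for a b
  proof -
    have R: "mcomp kG (iota m kG repG) U a b = (if a < m then \<theta> a b else 0)"
      unfolding mcomp_def iota_def \<theta>_def by auto
    show ?thesis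
    proof (cases "a < m \<and> b < kF")
      case False
      note nf = this
      show ?thesis
      proof (cases "a < m")
        case False
        then show ?thesis unfolding R by (simp add: mcomp_def V_def)
      next
        case True
        then have nb: "\<not> b < kF" using nf by simp
        have "\<theta> a b = 0" using \<theta>v[of a] nb by (simp add: Defs.vec_def)
        then show ?thesis unfolding R using nb by (simp add: mcomp_def iota_def)
      qed
    next
      case True
      then have ab: "a < m" "b < kF" by auto
      have L: "mcomp d V (iota d kF repF) a b = (\<Sum>i<d. V a i * repF i b)"
        unfolding mcomp_def iota_def by (rule sum.cong) (use ab in auto)
      show ?thesis
      proof (cases "\<exists>i0<d. g i0 = a")
        case True
        then obtain i0 where i0: "i0 < d" "g i0 = a" by blast
        have "(\<Sum>i<d. V a i * repF i b) = (\<Sum>i<d. if i = i0 then \<sigma> i0 * repF i0 b else 0)"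
          by (rule sum.cong) (use Vg[OF i0(1)] i0(2) in auto)
        also have "\<dots> = \<theta> a b" using i0 \<sigma>rep[OF i0(1)] by (simp add: sum.delta)
        finally show ?thesis using L R ab by simp
      next
        case False
        have "(\<Sum>i<d. V a i * repF i b) = (\<Sum>i<d. \<Lambda> a i * repF i b)"
          by (rule sum.cong) (use False ab in \<open>auto simp: V_def\<close>)
        also have "\<dots> = \<theta> a b" using \<Lambda>[OF ab(1)] by (simp add: comb_def)
        finally show ?thesis using L R ab by simp
      qed
    qed
  qed
  show ?thesis using Vemb eq by (intro bexI[of _ V]) (auto intro!: ext)
qed


section \<open>The space ell_infinity^d is in Pol_d\<close>

lemma linf_is_norm: "is_norm d (linf d)"
  unfolding is_norm_def
proof (intro conjI ballI allI impI)
  fix x assume "x \<in> Defs.vec d"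
  show "0 \<le> linf d x" by (rule linf_nonneg)
next
  fix x assume x: "x \<in> Defs.vec d" and z: "linf d x = 0"
  show "x = (\<lambda>i. 0)"
  proof (rule vec_eqI[OF x vec_zero])
    fix i assume "i < d"
    then show "x i = 0" using linf_ge[of i d x] z by simp
  qed
next
  fix x c assume x: "x \<in> Defs.vec d"
  have le: "linf d (\<lambda>i. c * x i) \<le> \<bar>c\<bar> * linf d x"
    by (rule linf_le) (auto simp: abs_mult intro: mult_left_mono linf_ge linf_nonneg mult_nonneg_nonneg)
  show "linf d (\<lambda>i. c * x i) = \<bar>c\<bar> * linf d x"
  proof (cases "c = 0")
    case True
    then show ?thesis using le linf_nonneg[of d "\<lambda>i. c * x i"] by simp
  next
    case False
    have "linf d x \<le> linf d (\<lambda>i. c * x i) / \<bar>c\<bar>"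
    proof (rule linf_le)
      show "0 \<le> linf d (\<lambda>i. c * x i) / \<bar>c\<bar>" by (simp add: linf_nonneg)
      fix i assume i: "i < d"
      have "\<bar>c\<bar> * \<bar>x i\<bar> \<le> linf d (\<lambda>i. c * x i)" using linf_ge[OF i, of "\<lambda>i. c * x i"] by (simp add: abs_mult)
      then show "\<bar>x i\<bar> \<le> linf d (\<lambda>i. c * x i) / \<bar>c\<bar>" using False by (simp add: field_simps)
    qed
    then have "\<bar>c\<bar> * linf d x \<le> linf d (\<lambda>i. c * x i)" using False by (simp add: field_simps)
    then show ?thesis using le by simp
  qed
next
  fix x y assume x: "x \<in> Defs.vec d" and y: "y \<in> Defs.vec d"
  show "linf d (\<lambda>i. x i + y i) \<le> linf d x + linf d y"
  proof (rule linf_le)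
    show "0 \<le> linf d x + linf d y" using linf_nonneg[of d x] linf_nonneg[of d y] by simp
    fix i assume i: "i < d"
    show "\<bar>x i + y i\<bar> \<le> linf d x + linf d y"
      using abs_triangle_ineq[of "x i" "y i"] linf_ge[OF i, of x] linf_ge[OF i, of y] by linarith
  qed
qed

lemma nrm_linf: "nrm d (linf d)"
  by (unfold_locales) (rule linf_is_norm)

lemma linf_ball_ext_finite: "finite {x. extreme_pt x (unit_ball d (linf d))}"
proof -
  define T where "T = {x \<in> Defs.vec d. \<forall>i<d. x i \<in> {-1, 1::real}}"
  have sub: "{x. extreme_pt x (unit_ball d (linf d))} \<subseteq> T"
  proof clarify
    fix x assume e: "extreme_pt x (unit_ball d (linf d))"
    have xB: "x \<in> Defs.vec d" "linf d x \<le> 1" using e by (auto simp: extreme_pt_def unit_ball_def)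
    have "x i \<in> {-1, 1}" if i: "i < d" for i
    proof (rule ccontr)
      assume "x i \<notin> {-1, 1}"
      moreover have "\<bar>x i\<bar> \<le> 1" using linf_ge[OF i, of x] xB(2) by simp
      ultimately have lt: "\<bar>x i\<bar> < 1" by (auto simp: abs_if split: if_splits)
      define \<delta> where "\<delta> = 1 - \<bar>x i\<bar>"
      have dp: "\<delta> > 0" using lt by (simp add: \<delta>_def)
      define a where "a = (\<lambda>l. x l + \<delta> * unit i l)"
      define b where "b = (\<lambda>l. x l + (- \<delta>) * unit i l)"
      have inB: "(\<lambda>l. x l + c * unit i l) \<in> unit_ball d (linf d)" if c: "\<bar>c\<bar> = \<delta>" for c
      proof -
        have "(\<lambda>l. x l + c * unit i l) \<in> Defs.vec d"
          using xB(1) i by (intro vec_add vec_scale vec_unit)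
        moreover have "linf d (\<lambda>l. x l + c * unit i l) \<le> 1"
        proof (rule linf_le)
          fix l assume l: "l < d"
          show "\<bar>x l + c * unit i l\<bar> \<le> 1"
          proof (cases "l = i")
            case True
            then show ?thesis using c abs_triangle_ineq[of "x i" c] by (simp add: unit_def \<delta>_def)
          next
            case False
            then show ?thesis using linf_ge[OF l, of x] xB(2) by (simp add: unit_def)
          qed
        qed simp
        ultimately show ?thesis by (simp add: unit_ball_def)
      qed
      have aB: "a \<in> unit_ball d (linf d)" using inB[of \<delta>] dp by (simp add: a_def)
      have bB: "b \<in> unit_ball d (linf d)" using inB[of "-\<delta>"] dp by (simp add: b_def)
      have "x = (\<lambda>l. (1 - 1/2) * a l + (1/2) * b l)"
        by (rule ext) (simp add: a_def b_def algebra_simps)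
      moreover have "(0::real) < 1/2" "(1/2::real) < 1" by simp_all
      ultimately have "a = b" using e aB bB unfolding extreme_pt_def by blast
      then have "a i = b i" by simp
      then show False using dp by (simp add: a_def b_def unit_def)
    qed
    then show "x \<in> T" using xB by (simp add: T_def)
  qed
  define h where "h f = (\<lambda>i. if i < d then f i else 0::real)" for f :: "nat \<Rightarrow> real"
  have "T \<subseteq> h ` (PiE {..<d} (\<lambda>_. {-1, 1}))"
  proof
    fix x assume x: "x \<in> T"
    have "h (restrict x {..<d}) = x"
      using x unfolding h_def T_def by (intro ext) (auto simp: Defs.vec_def)
    moreover have "restrict x {..<d} \<in> PiE {..<d} (\<lambda>_. {-1, 1})" using x by (auto simp: T_def)
    ultimately show "x \<in> h ` (PiE {..<d} (\<lambda>_. {-1, 1}))" by (metis image_eqI)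
  qed
  moreover have "finite (h ` (PiE {..<d} (\<lambda>_. {-1, 1::real})))" by (intro finite_imageI finite_PiE) auto
  ultimately show ?thesis using finite_subset[OF subset_trans[OF sub]] by blast
qed

lemma linf_Dchar: "\<phi> \<in> dual_ball d (linf d) \<longleftrightarrow> \<phi> \<in> Defs.vec d \<and> (\<Sum>j<d. \<bar>\<phi> j\<bar>) \<le> 1"
proof -
  interpret L: nrm d "linf d" by (rule nrm_linf)
  show ?thesis
    unfolding L.Dchar
  proof (intro iffI conjI; (elim conjE)?)
    assume v: "\<phi> \<in> Defs.vec d" and h: "\<forall>x\<in>Defs.vec d. \<bar>dot d \<phi> x\<bar> \<le> linf d x"
    show "\<phi> \<in> Defs.vec d" by (rule v)
    define x where "x j = (if j < d then sgn (\<phi> j) else 0)" for j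
    have xv: "x \<in> Defs.vec d" by (simp add: x_def Defs.vec_def)
    have "linf d x \<le> 1" by (rule linf_le) (auto simp: x_def abs_sgn_eq)
    moreover have "dot d \<phi> x = (\<Sum>j<d. \<bar>\<phi> j\<bar>)"
      unfolding dot_def by (rule sum.cong) (auto simp: x_def sgn_if abs_if)
    ultimately show "(\<Sum>j<d. \<bar>\<phi> j\<bar>) \<le> 1" using h xv by force
  next
    assume v: "\<phi> \<in> Defs.vec d" and s: "(\<Sum>j<d. \<bar>\<phi> j\<bar>) \<le> 1"
    show "\<phi> \<in> Defs.vec d" by (rule v)
    show "\<forall>x\<in>Defs.vec d. \<bar>dot d \<phi> x\<bar> \<le> linf d x"
    proof
      fix x assume x: "x \<in> Defs.vec d"
      have "\<bar>dot d \<phi> x\<bar> \<le> (\<Sum>j<d. \<bar>\<phi> j\<bar> * \<bar>x j\<bar>)" by (rule dot_abs_le)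
      also have "\<dots> \<le> (\<Sum>j<d. \<bar>\<phi> j\<bar> * linf d x)"
        by (rule sum_mono) (auto intro: mult_left_mono linf_ge)
      also have "\<dots> = (\<Sum>j<d. \<bar>\<phi> j\<bar>) * linf d x" by (simp add: sum_distrib_right)
      also have "\<dots> \<le> 1 * linf d x" using s linf_nonneg by (intro mult_right_mono) auto
      finally show "\<bar>dot d \<phi> x\<bar> \<le> linf d x" by simp
    qed
  qed
qed


lemma unit_L1: "i < d \<Longrightarrow> (\<Sum>j<d. \<bar>unit i j\<bar>) = 1"
proof -
  assume i: "i < d"
  have "(\<Sum>j<d. \<bar>unit i j\<bar>) = (\<Sum>j<d. if j = i then 1 else 0)"
    by (rule sum.cong) (auto simp: unit_def)
  then show ?thesis using i by (simp add: sum.delta)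
qed

lemma unitD: "i < d \<Longrightarrow> unit i \<in> dual_ball d (linf d)"
  using linf_Dchar vec_unit unit_L1 by simp

lemma L1_coord: "\<phi> \<in> dual_ball d (linf d) \<Longrightarrow> l < d \<Longrightarrow> \<bar>\<phi> l\<bar> \<le> 1"
proof -
  assume p: "\<phi> \<in> dual_ball d (linf d)" and l: "l < d"
  have "\<bar>\<phi> l\<bar> \<le> (\<Sum>j<d. \<bar>\<phi> j\<bar>)"
    by (rule member_le_sum[where f="\<lambda>j. \<bar>\<phi> j\<bar>"]) (use l in auto)
  then show ?thesis using p linf_Dchar by auto
qed

lemma L1_two: "\<phi> \<in> dual_ball d (linf d) \<Longrightarrow> i < d \<Longrightarrow> l < d \<Longrightarrow> i \<noteq> l \<Longrightarrow> \<bar>\<phi> i\<bar> + \<bar>\<phi> l\<bar> \<le> 1"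
proof -
  assume p: "\<phi> \<in> dual_ball d (linf d)" and il: "i < d" "l < d" "i \<noteq> l"
  have "(\<Sum>j\<in>{i, l}. \<bar>\<phi> j\<bar>) \<le> (\<Sum>j<d. \<bar>\<phi> j\<bar>)"
    by (rule sum_mono2) (use il in auto)
  then show ?thesis using p linf_Dchar il by auto
qed

lemma unit_ext: assumes i: "i < d" shows "extreme_pt (unit i) (dual_ball d (linf d))"
  unfolding extreme_pt_def
proof (intro conjI ballI allI impI unitD[OF i])
  fix a b t assume ab: "a \<in> dual_ball d (linf d)" "b \<in> dual_ball d (linf d)"
    and t: "0 < t \<and> t < 1 \<and> unit i = (\<lambda>l. (1 - t) * a l + t * b l)"
  have t0: "0 < t" "t < 1" using t by auto
  have "unit i i = (1 - t) * a i + t * b i" using t by metis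
  then have e1: "1 = (1 - t) * a i + t * b i" by (simp add: unit_def)
  have ai: "a i \<le> 1" "b i \<le> 1" using L1_coord[OF ab(1) i] L1_coord[OF ab(2) i] by auto
  have e0: "(1 - t) * (1 - a i) + t * (1 - b i) = 0" using e1 by (simp add: algebra_simps)
  have n1: "(1 - t) * (1 - a i) \<ge> 0" "t * (1 - b i) \<ge> 0"
    using ai t0 by (intro mult_nonneg_nonneg; simp)+
  then have z1: "(1 - t) * (1 - a i) = 0" and z2: "t * (1 - b i) = 0" using e0 by linarith+
  have a1: "a i = 1" and b1: "b i = 1" using z1 z2 t0 by simp_all
  have "a l = b l" if l: "l < d" for l
  proof (cases "l = i")
    case True then show ?thesis using a1 b1 by simp
  next
    case False
    have "a l = 0" using L1_two[OF ab(1) i l] False a1 by auto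
    moreover have "b l = 0" using L1_two[OF ab(2) i l] False b1 by auto
    ultimately show ?thesis by simp
  qed
  then show "a = b" using vec_eqI ab linf_Dchar by blast
qed

lemma linf_ext:
  assumes d: "0 < d"
  shows "{\<phi>. extreme_pt \<phi> (dual_ball d (linf d))} = unit ` {..<d} \<union> (\<lambda>i. neg (unit i)) ` {..<d}"
proof -
  interpret L: nrm d "linf d" by (rule nrm_linf)
  show ?thesis
  proof
    show "{\<phi>. extreme_pt \<phi> (dual_ball d (linf d))} \<subseteq> unit ` {..<d} \<union> (\<lambda>i. neg (unit i)) ` {..<d}"
    proof
      fix \<phi> assume "\<phi> \<in> {\<phi>. extreme_pt \<phi> (dual_ball d (linf d))}"
      then have e: "extreme_pt \<phi> (dual_ball d (linf d))" by simp
      have pD: "\<phi> \<in> dual_ball d (linf d)" using e by (simp add: extreme_pt_def)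
      have nz: "\<phi> \<noteq> (\<lambda>i. 0)"
      proof
        assume z: "\<phi> = (\<lambda>i. 0)"
        have "(\<lambda>i. 0::real) = (\<lambda>l. (1 - 1/2) * unit 0 l + (1/2) * neg (unit 0) l)"
          by (rule ext) (simp add: neg_def)
        moreover have "(0::real) < 1/2" "(1/2::real) < 1" by simp_all
        ultimately have "unit 0 = neg (unit 0)"
          using e z unitD[OF d] L.D_neg[OF unitD[OF d]] unfolding extreme_pt_def by blast
        then have "unit 0 0 = neg (unit 0) 0" by simp
        then show False by (simp add: unit_def neg_def)
      qed
      have pv: "\<phi> \<in> Defs.vec d" and ps: "(\<Sum>j<d. \<bar>\<phi> j\<bar>) \<le> 1" using pD linf_Dchar by auto
      have "comb d unit \<phi> = \<phi>"
      proof (rule ext)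
        fix l
        have "comb d unit \<phi> l = (\<Sum>j<d. if j = l then \<phi> j else 0)"
          unfolding comb_def by (rule sum.cong) (auto simp: unit_def)
        also have "\<dots> = \<phi> l" using pv by (auto simp: sum.delta Defs.vec_def)
        finally show "comb d unit \<phi> l = \<phi> l" .
      qed
      then have "\<phi> \<in> hullset d unit" using hull_mem[OF ps, of unit] by simp
      then obtain j where "j < d" "\<phi> = unit j \<or> \<phi> = neg (unit j)"
        using L.X_ext[where p=d and \<psi>=unit and \<phi>=\<phi>] unitD e nz by blast
      then show "\<phi> \<in> unit ` {..<d} \<union> (\<lambda>i. neg (unit i)) ` {..<d}" by auto
    qed
    show "unit ` {..<d} \<union> (\<lambda>i. neg (unit i)) ` {..<d} \<subseteq> {\<phi>. extreme_pt \<phi> (dual_ball d (linf d))}"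
      using unit_ext extreme_neg[OF L.D_neg] by auto
  qed
qed

lemma card_units: "card (unit ` {..<d} \<union> (\<lambda>i. neg (unit i)) ` {..<d}) = 2 * d"
proof -
  have inj1: "inj_on unit {..<d}"
  proof (rule inj_onI)
    fix i j assume "unit i = unit j"
    then have "unit i i = unit j i" by simp
    then show "i = j" by (simp add: unit_def split: if_splits)
  qed
  have inj2: "inj_on (\<lambda>i. neg (unit i)) {..<d}"
  proof (rule inj_onI)
    fix i j assume "neg (unit i) = neg (unit j)"
    then have "neg (unit i) i = neg (unit j) i" by simp
    then show "i = j" by (simp add: unit_def neg_def split: if_splits)
  qed
  have disj: "unit ` {..<d} \<inter> (\<lambda>i. neg (unit i)) ` {..<d} = {}"
  proof (rule ccontr)
    assume "unit ` {..<d} \<inter> (\<lambda>i. neg (unit i)) ` {..<d} \<noteq> {}"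
    then obtain i j where "unit i = neg (unit j)" by auto
    then have "unit i i = neg (unit j) i" by simp
    then show False by (simp add: unit_def neg_def split: if_splits)
  qed
  have "card (unit ` {..<d} \<union> (\<lambda>i. neg (unit i)) ` {..<d}) = card (unit ` {..<d}) + card ((\<lambda>i. neg (unit i)) ` {..<d})"
    by (rule card_Un_disjoint) (use disj in auto)
  also have "\<dots> = d + d" using card_image[OF inj1] card_image[OF inj2] by simp
  finally show ?thesis by simp
qed

lemma Pol_linf: "0 < d \<Longrightarrow> Pol d d (linf d)"
  unfolding Pol_def polyhedral_def
  using linf_is_norm linf_ball_ext_finite linf_ext card_units by simp

lemma dirB:
  assumes "0 < d" "0 < m" and P: "n_pol_prop d m r \<epsilon> n"
  shows "n_inf_prop d m r \<epsilon> n"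
  using P Pol_linf[OF assms(1)] Pol_linf[OF assms(2)]
  unfolding n_pol_prop_def n_inf_prop_def by blast

lemma Pol_reps:
  assumes P: "Pol d k N" and d: "0 < d"
  shows "nrm k N \<and> (\<exists>rep. (\<forall>i<d. extreme_pt (rep i) (dual_ball k N)) \<and>
    (\<forall>\<phi>. extreme_pt \<phi> (dual_ball k N) \<longrightarrow> (\<exists>i<d. \<phi> = rep i \<or> \<phi> = neg (rep i))) \<and>
    (\<forall>i<d. \<forall>j<d. (rep i = rep j \<or> rep i = neg (rep j)) \<longrightarrow> i = j) \<and>
    (\<forall>i<d. rep i \<noteq> (\<lambda>l. 0)))"
proof -
  have n: "nrm k N" using P by (simp add: Pol_def polyhedral_def nrm_def)
  interpret nrm k N by (rule n)
  have fin: "finite {\<phi>. extreme_pt \<phi> (dual_ball k N)}" and card: "card {\<phi>. extreme_pt \<phi> (dual_ball k N)} = 2 * d"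
    using P by (auto simp: Pol_def)
  obtain rep where r: "\<forall>i<d. extreme_pt (rep i) (dual_ball k N)"
    "\<forall>\<phi>. extreme_pt \<phi> (dual_ball k N) \<longrightarrow> (\<exists>i<d. \<phi> = rep i \<or> \<phi> = neg (rep i))"
    "\<forall>i<d. \<forall>j<d. (rep i = rep j \<or> rep i = neg (rep j)) \<longrightarrow> i = j"
    using reps[OF fin card d] by blast
  have "\<forall>i<d. rep i \<noteq> (\<lambda>l. 0)" using r(1) zero_not_ext[OF fin card d] by metis
  then show ?thesis using n r by blast
qed

lemma dirA:
  assumes d: "0 < d" and m: "0 < m" and r: "0 < r" and P: "n_inf_prop d m r \<epsilon> n"
  shows "n_pol_prop d m r \<epsilon> n"
  unfolding n_pol_prop_def
proof (intro conjI allI impI)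
  have "coloring (\<lambda>_. 0) r (Emb d (linf d) n (linf n))" using r by (simp add: coloring_def)
  then obtain \<gamma> where "\<gamma> \<in> Emb m (linf m) n (linf n)" using P unfolding n_inf_prop_def by blast
  then show "m \<le> n" by (rule linf_emb_dim)
next
  fix kF NF kG NG c
  assume PF: "Pol d kF NF" and PG: "Pol m kG NG" and col: "coloring c r (Emb kF NF n (linf n))"
  obtain repF where F: "nrm kF NF" and f1: "\<forall>i<d. extreme_pt (repF i) (dual_ball kF NF)"
    and f2: "\<forall>\<phi>. extreme_pt \<phi> (dual_ball kF NF) \<longrightarrow> (\<exists>i<d. \<phi> = repF i \<or> \<phi> = neg (repF i))"
    and f3: "\<forall>i<d. \<forall>j<d. (repF i = repF j \<or> repF i = neg (repF j)) \<longrightarrow> i = j"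
    and f0: "\<forall>i<d. repF i \<noteq> (\<lambda>l. 0)"
    using Pol_reps[OF PF d] by blast
  obtain repG where G: "nrm kG NG" and g1: "\<forall>i<m. extreme_pt (repG i) (dual_ball kG NG)"
    and g2: "\<forall>\<phi>. extreme_pt \<phi> (dual_ball kG NG) \<longrightarrow> (\<exists>i<m. \<phi> = repG i \<or> \<phi> = neg (repG i))"
    using Pol_reps[OF PG m] by blast
  define \<iota>F where "\<iota>F = iota d kF repF"
  define \<iota>G where "\<iota>G = iota m kG repG"
  have iF: "\<iota>F \<in> Emb kF NF d (linf d)" unfolding \<iota>F_def by (rule nrm.iota_emb[OF F f1 f2])
  have iG: "\<iota>G \<in> Emb kG NG m (linf m)" unfolding \<iota>G_def by (rule nrm.iota_emb[OF G g1 g2])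
  define c' where "c' A = c (mcomp d A \<iota>F)" for A
  have col': "coloring c' r (Emb d (linf d) n (linf n))"
    using col emb_comp[OF _ iF] by (auto simp: coloring_def c'_def)
  obtain \<gamma> where \<gamma>: "\<gamma> \<in> Emb m (linf m) n (linf n)"
    and em: "eps_mono c' r (opdist d (linf d) (linf n)) \<epsilon> (Emb d (linf d) n (linf n))
             (mcomp m \<gamma> ` Emb d (linf d) m (linf m))"
    using P col' unfolding n_inf_prop_def by blast
  obtain i where i: "i < r" and hi: "\<And>s. s \<in> mcomp m \<gamma> ` Emb d (linf d) m (linf m) \<Longrightarrow>
      \<exists>t\<in>Emb d (linf d) n (linf n). c' t = i \<and> opdist d (linf d) (linf n) s t \<le> \<epsilon>"
    using em unfolding eps_mono_def by blast
  define T where "T = mcomp m \<gamma> \<iota>G"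
  have Tm: "T \<in> Emb kG NG n (linf n)" unfolding T_def by (rule emb_comp[OF \<gamma> iG])
  have "eps_mono c r (opdist kF NF (linf n)) \<epsilon> (Emb kF NF n (linf n)) (mcomp kG T ` Emb kF NF kG NG)"
    unfolding eps_mono_def
  proof (intro exI[of _ i] conjI i ballI)
    fix s' assume "s' \<in> mcomp kG T ` Emb kF NF kG NG"
    then obtain U where U: "U \<in> Emb kF NF kG NG" and s': "s' = mcomp kG T U" by blast
    obtain V where V: "V \<in> Emb d (linf d) m (linf m)" and VU: "mcomp d V \<iota>F = mcomp kG \<iota>G U"
      using lifting[OF F G f1 f2 f3 f0 g1 g2 U] unfolding \<iota>F_def \<iota>G_def by blast
    have "mcomp m \<gamma> V \<in> mcomp m \<gamma> ` Emb d (linf d) m (linf m)" using V by blast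
    then obtain t where t: "t \<in> Emb d (linf d) n (linf n)" "c' t = i"
      "opdist d (linf d) (linf n) (mcomp m \<gamma> V) t \<le> \<epsilon>" using hi by blast
    have s'eq: "s' = mcomp d (mcomp m \<gamma> V) \<iota>F"
    proof -
      have "s' = mcomp kG (mcomp m \<gamma> \<iota>G) U" by (simp add: s' T_def)
      also have "\<dots> = mcomp m \<gamma> (mcomp kG \<iota>G U)" by (rule mcomp_assoc)
      also have "\<dots> = mcomp m \<gamma> (mcomp d V \<iota>F)" by (simp add: VU)
      also have "\<dots> = mcomp d (mcomp m \<gamma> V) \<iota>F" by (rule mcomp_assoc[symmetric])
      finally show ?thesis .
    qed
    have "mcomp d t \<iota>F \<in> Emb kF NF n (linf n)" by (rule emb_comp[OF t(1) iF])
    moreover have "c (mcomp d t \<iota>F) = i" using t(2) by (simp add: c'_def)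
    moreover have "opdist kF NF (linf n) s' (mcomp d t \<iota>F) \<le> \<epsilon>"
      unfolding s'eq using opdist_comp_le[OF iF, of n "mcomp m \<gamma> V" t] t(3) by linarith
    ultimately show "\<exists>t\<in>Emb kF NF n (linf n). c t = i \<and> opdist kF NF (linf n) s' t \<le> \<epsilon>" by blast
  qed
  then show "\<exists>T\<in>Emb kG NG n (linf n). eps_mono c r (opdist kF NF (linf n)) \<epsilon> (Emb kF NF n (linf n))
          (mcomp kG T ` Emb kF NF kG NG)" using Tm by blast
qed

theorem proposition6p31:
  fixes d m r :: nat and \<epsilon> :: real
  assumes "0 < d" and "0 < m" and "0 < r" and "0 < \<epsilon>"
  shows "n_pol d m r \<epsilon> = n_inf d m r \<epsilon>"
proof -
  have "n_pol_prop d m r \<epsilon> = n_inf_prop d m r \<epsilon>"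
    using dirA[OF assms(1-3)] dirB[OF assms(1,2)] by (intro ext iffI) auto
  then show ?thesis by (simp add: n_pol_def n_inf_def)
qed


end
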